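(* Let $\mathcal{A}\subseteq\mathcal{B}(\mathcal{H})$ be a von Neumann algebra on a complex separable Hilbert space, let $\tau_t(X)=\mathrm{U}_tX\mathrm{U}_t^{-1}$ be automorphisms of $\mathcal{A}$ implemented by a strongly continuous unitary representation $\mathrm{U}$ of $(\mathbb{R},+)$ with $t\mapsto\tau_t(X)$ norm continuous for every $X\in\mathcal{A}$. Let $\omega$ be a normal state with density operator $W$, let $P\in\mathcal{A}$ be a projection that is analytic for $\tau$, write $P_t=\tau_t(P)$, and let $t_1>0$. If $\omega(P_{t_1})\neq\omega_P(P_{t_1})$, then the set $$S=\{t\in[0,t_1]:\ \omega(P_t)=\omega_P(P_t)\}$$ is at most countable and discrete (every $t_0\in S$ has a neighbourhood $\{t:|t-t_0|<r\}$, $r>0$, meeting $S$ only in $t_0$). Consequently the mark induced by $P$ is manifested at $P_t$ for every $t\in(0,t_1]$ except for a countable set of isolated points, i.e. the process $\langle\mathcal{A},\mathbb{R},\tau\rangle$ is CSIP-causal.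
   Context: $\omega(X)=\mathrm{tr}(WX)$; $\omega_P(X)=\mathrm{tr}(W_PX)$ with $W_P=PWP+(I-P)W(I-P)$. An element $A\in\mathcal{A}$ is analytic for $\tau$ if there exist $\lambda>0$ and a function $f:I_\lambda\to\mathcal{A}$ on the strip $I_\lambda=\{z\in\mathbb{C}:|\mathrm{Im}\,z|<\lambda\}$ with $f(t)=\tau_t(A)$ for real $t$ and $z\mapsto\eta(f(z))$ analytic on $I_\lambda$ for every continuous linear functional $\eta\in\mathcal{A}^*$. A process $\langle\mathcal{A},\mathbb{R},\tau\rangle$ is CSIP-causal if for some normal state $\omega$, observable $Q$ and projection $P$, the mark is manifested ($\omega(\tau_t(Q))\neq\omega_P(\tau_t(Q))$) for every $t\in(0,t_1]$ of some closed interval $[0,t_1]$ except for a countable set of values of $t$ that are isolated in the usual metric of $\mathbb{R}$. *)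

theory Defs
  imports "HOL-Analysis.Analysis"
begin

text \<open>A complex separable Hilbert space is modelled concretely (up to unitary
isomorphism) as l2(I) for an index set I of natural numbers: square-summable
sequences vanishing outside I. Bounded operators are complex-linear bounded
maps on l2(I), extended by 0 outside l2(I) (so that equality of operators is
equality of functions).\<close>

type_synonym vec = "nat \<Rightarrow> complex"
type_synonym op = "vec \<Rightarrow> vec"

definition l2 :: "nat set \<Rightarrow> vec set" where
  "l2 I = {x. (\<forall>n. n \<notin> I \<longrightarrow> x n = 0) \<and> summable (\<lambda>n. (cmod (x n))\<^sup>2)}"

definition vinner :: "vec \<Rightarrow> vec \<Rightarrow> complex" where
  "vinner x y = (\<Sum>n. cnj (x n) * y n)"

definition vnorm :: "vec \<Rightarrow> real" where
  "vnorm x = sqrt (\<Sum>n. (cmod (x n))\<^sup>2)"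

definition vzero :: vec where "vzero = (\<lambda>_. 0)"

definition basis_vec :: "nat \<Rightarrow> vec" where
  "basis_vec k = (\<lambda>n. if n = k then 1 else 0)"

definition bop :: "nat set \<Rightarrow> op set" where
  "bop I = {T. (\<forall>x\<in>l2 I. T x \<in> l2 I)
     \<and> (\<forall>x\<in>l2 I. \<forall>y\<in>l2 I. \<forall>a::complex. T (\<lambda>n. a * x n + y n) = (\<lambda>n. a * T x n + T y n))
     \<and> (\<exists>C. \<forall>x\<in>l2 I. vnorm (T x) \<le> C * vnorm x)
     \<and> (\<forall>x. x \<notin> l2 I \<longrightarrow> T x = vzero)}"

definition idop :: "nat set \<Rightarrow> op" where
  "idop I = (\<lambda>x. if x \<in> l2 I then x else vzero)"

definition opminus :: "nat set \<Rightarrow> op \<Rightarrow> op \<Rightarrow> op" where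
  "opminus I S T = (\<lambda>x. if x \<in> l2 I then (\<lambda>n. S x n - T x n) else vzero)"

definition opplus :: "nat set \<Rightarrow> op \<Rightarrow> op \<Rightarrow> op" where
  "opplus I S T = (\<lambda>x. if x \<in> l2 I then (\<lambda>n. S x n + T x n) else vzero)"

definition opscale :: "nat set \<Rightarrow> complex \<Rightarrow> op \<Rightarrow> op" where
  "opscale I a T = (\<lambda>x. if x \<in> l2 I then (\<lambda>n. a * T x n) else vzero)"

definition opnorm :: "nat set \<Rightarrow> op \<Rightarrow> real" where
  "opnorm I T = Sup ((\<lambda>x. vnorm (T x)) ` {x \<in> l2 I. vnorm x \<le> 1})"

definition opinv :: "nat set \<Rightarrow> op \<Rightarrow> op" where
  "opinv I T = (\<lambda>x. if x \<in> l2 I then inv_into (l2 I) T x else vzero)"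

definition is_adjoint :: "nat set \<Rightarrow> op \<Rightarrow> op \<Rightarrow> bool" where
  "is_adjoint I T S \<longleftrightarrow> S \<in> bop I \<and> (\<forall>x\<in>l2 I. \<forall>y\<in>l2 I. vinner (T x) y = vinner x (S y))"

definition adjoint :: "nat set \<Rightarrow> op \<Rightarrow> op" where
  "adjoint I T = (THE S. is_adjoint I T S)"

definition commutant :: "nat set \<Rightarrow> op set \<Rightarrow> op set" where
  "commutant I S = {T \<in> bop I. \<forall>X\<in>S. T \<circ> X = X \<circ> T}"

definition von_neumann_algebra :: "nat set \<Rightarrow> op set \<Rightarrow> bool" where
  "von_neumann_algebra I A \<longleftrightarrow> A \<subseteq> bop I \<and> (\<forall>X\<in>A. adjoint I X \<in> A)
     \<and> commutant I (commutant I A) = A"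

definition self_adjoint :: "nat set \<Rightarrow> op \<Rightarrow> bool" where
  "self_adjoint I T \<longleftrightarrow> T \<in> bop I \<and> adjoint I T = T"

definition projection :: "nat set \<Rightarrow> op \<Rightarrow> bool" where
  "projection I P \<longleftrightarrow> self_adjoint I P \<and> P \<circ> P = P"

definition unitary :: "nat set \<Rightarrow> op \<Rightarrow> bool" where
  "unitary I U \<longleftrightarrow> U \<in> bop I \<and> bij_betw U (l2 I) (l2 I)
     \<and> (\<forall>x\<in>l2 I. \<forall>y\<in>l2 I. vinner (U x) (U y) = vinner x y)"

definition strongly_cont_unitary_rep :: "nat set \<Rightarrow> (real \<Rightarrow> op) \<Rightarrow> bool" where
  "strongly_cont_unitary_rep I U \<longleftrightarrow> (\<forall>t. unitary I (U t)) \<and> U 0 = idop I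
     \<and> (\<forall>s t. U (s + t) = U s \<circ> U t)
     \<and> (\<forall>x\<in>l2 I. \<forall>t0. ((\<lambda>t. vnorm (\<lambda>n. U t x n - U t0 x n)) \<longlongrightarrow> 0) (at t0))"

definition tau :: "nat set \<Rightarrow> (real \<Rightarrow> op) \<Rightarrow> real \<Rightarrow> op \<Rightarrow> op" where
  "tau I U t X = U t \<circ> X \<circ> opinv I (U t)"

definition trace :: "nat set \<Rightarrow> op \<Rightarrow> complex" where
  "trace I T = (\<Sum>n. if n \<in> I then vinner (basis_vec n) (T (basis_vec n)) else 0)"

definition positive_op :: "nat set \<Rightarrow> op \<Rightarrow> bool" where
  "positive_op I T \<longleftrightarrow> T \<in> bop I \<and> (\<forall>x\<in>l2 I. Im (vinner x (T x)) = 0 \<and> Re (vinner x (T x)) \<ge> 0)"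

definition density_operator :: "nat set \<Rightarrow> op \<Rightarrow> bool" where
  "density_operator I W \<longleftrightarrow> positive_op I W
     \<and> summable (\<lambda>n. if n \<in> I then Re (vinner (basis_vec n) (W (basis_vec n))) else 0)
     \<and> trace I W = 1"

definition omega :: "nat set \<Rightarrow> op \<Rightarrow> op \<Rightarrow> complex" where
  "omega I W X = trace I (W \<circ> X)"

definition W_P :: "nat set \<Rightarrow> op \<Rightarrow> op \<Rightarrow> op" where
  "W_P I P W = opplus I (P \<circ> W \<circ> P)
      (opminus I (idop I) P \<circ> W \<circ> opminus I (idop I) P)"

definition strip :: "real \<Rightarrow> complex set" where
  "strip l = {z. \<bar>Im z\<bar> < l}"

definition cont_lin_functional :: "nat set \<Rightarrow> op set \<Rightarrow> (op \<Rightarrow> complex) \<Rightarrow> bool" where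
  "cont_lin_functional I A \<eta> \<longleftrightarrow>
     (\<forall>X\<in>A. \<forall>Y\<in>A. \<forall>a. \<eta> (opplus I (opscale I a X) Y) = a * \<eta> X + \<eta> Y)
     \<and> (\<exists>C. \<forall>X\<in>A. cmod (\<eta> X) \<le> C * opnorm I X)"

definition analytic_elem :: "nat set \<Rightarrow> op set \<Rightarrow> (real \<Rightarrow> op) \<Rightarrow> op \<Rightarrow> bool" where
  "analytic_elem I A U X \<longleftrightarrow> (\<exists>l>0. \<exists>f. (\<forall>z\<in>strip l. f z \<in> A)
     \<and> (\<forall>t::real. f (complex_of_real t) = tau I U t X)
     \<and> (\<forall>\<eta>. cont_lin_functional I A \<eta> \<longrightarrow> (\<lambda>z. \<eta> (f z)) analytic_on strip l))"

definition CSIP_causal :: "nat set \<Rightarrow> op set \<Rightarrow> (real \<Rightarrow> op) \<Rightarrow> bool" where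
  "CSIP_causal I A U \<longleftrightarrow> (\<exists>W Q P t1 E. density_operator I W \<and> Q \<in> A \<and> self_adjoint I Q
     \<and> P \<in> A \<and> projection I P \<and> t1 > 0 \<and> countable E
     \<and> (\<forall>t0\<in>E. \<exists>r>0. \<forall>t\<in>E. \<bar>t - t0\<bar> < r \<longrightarrow> t = t0)
     \<and> (\<forall>t\<in>{0<..t1} - E. omega I W (tau I U t Q) \<noteq> omega I (W_P I P W) (tau I U t Q)))"

end

theory Submission
  imports Defs "HOL-Complex_Analysis.Complex_Analysis"
begin

lemma l2_zero: "x \<in> l2 I \<Longrightarrow> n \<notin> I \<Longrightarrow> x n = 0"
  by (simp add: l2_def)

lemma l2_summ: "x \<in> l2 I \<Longrightarrow> summable (\<lambda>n. (cmod (x n))\<^sup>2)"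
  by (simp add: l2_def)

lemma summable_cmod_mult:
  assumes "x \<in> l2 I" "y \<in> l2 I"
  shows "summable (\<lambda>n. cmod (x n) * cmod (y n))"
proof (rule summable_comparison_test'[where N=0])
  show "summable (\<lambda>n. (cmod (x n))\<^sup>2 + (cmod (y n))\<^sup>2)"
    using assms by (intro summable_add l2_summ)
  fix n
  have "2 * cmod (x n) * cmod (y n) \<le> (cmod (x n))\<^sup>2 + (cmod (y n))\<^sup>2"
    by (rule sum_squares_bound)
  moreover have "0 \<le> cmod (x n) * cmod (y n)" by simp
  ultimately have "cmod (x n) * cmod (y n) \<le> (cmod (x n))\<^sup>2 + (cmod (y n))\<^sup>2" by linarith
  then show "norm (cmod (x n) * cmod (y n)) \<le> (cmod (x n))\<^sup>2 + (cmod (y n))\<^sup>2"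
    by (simp add: abs_mult)
qed

lemma vinner_summable:
  assumes "x \<in> l2 I" "y \<in> l2 I"
  shows "summable (\<lambda>n. cnj (x n) * y n)"
  by (rule summable_norm_cancel) (use summable_cmod_mult[OF assms] in \<open>simp add: norm_mult\<close>)

lemma vinner_abs_summable:
  assumes "x \<in> l2 I" "y \<in> l2 I"
  shows "summable (\<lambda>n. norm (cnj (x n) * y n))"
  using summable_cmod_mult[OF assms] by (simp add: norm_mult)

lemma l2_lincomb:
  assumes "x \<in> l2 I" "y \<in> l2 I"
  shows "(\<lambda>n. a * x n + y n) \<in> l2 I"
proof -
  have "summable (\<lambda>n. (cmod (a * x n + y n))\<^sup>2)"
  proof (rule summable_comparison_test'[where N=0])
    show "summable (\<lambda>n. 2 * (cmod a)\<^sup>2 * (cmod (x n))\<^sup>2 + 2 * (cmod (y n))\<^sup>2)"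
      using assms by (intro summable_add summable_mult l2_summ)
    fix n
    have "cmod (a * x n + y n) \<le> cmod a * cmod (x n) + cmod (y n)"
      by (metis norm_mult norm_triangle_ineq)
    then have "(cmod (a * x n + y n))\<^sup>2 \<le> (cmod a * cmod (x n) + cmod (y n))\<^sup>2"
      by (simp add: power_mono)
    also have "\<dots> \<le> 2 * (cmod a)\<^sup>2 * (cmod (x n))\<^sup>2 + 2 * (cmod (y n))\<^sup>2"
      using sum_squares_bound[of "cmod a * cmod (x n)" "cmod (y n)"] by (simp add: power2_sum power_mult_distrib)
    finally show "norm ((cmod (a * x n + y n))\<^sup>2) \<le> 2 * (cmod a)\<^sup>2 * (cmod (x n))\<^sup>2 + 2 * (cmod (y n))\<^sup>2"
      by simp
  qed
  then show ?thesis using assms by (simp add: l2_def)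
qed

lemma vzero_l2[simp]: "vzero \<in> l2 I"
  by (simp add: l2_def vzero_def)

lemma l2_scale: "x \<in> l2 I \<Longrightarrow> (\<lambda>n. a * x n) \<in> l2 I"
  using l2_lincomb[OF _ vzero_l2, of x I a] by (simp add: vzero_def)

lemma l2_add: "x \<in> l2 I \<Longrightarrow> y \<in> l2 I \<Longrightarrow> (\<lambda>n. x n + y n) \<in> l2 I"
  using l2_lincomb[of x I y 1] by simp

lemma l2_diff: "x \<in> l2 I \<Longrightarrow> y \<in> l2 I \<Longrightarrow> (\<lambda>n. x n - y n) \<in> l2 I"
  using l2_lincomb[of y I x "-1"] by simp

lemma l2_finite_support:
  assumes "finite J" "J \<subseteq> I" "\<And>k. k \<notin> J \<Longrightarrow> x k = 0"
  shows "x \<in> l2 I"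
proof -
  have "summable (\<lambda>n. (cmod (x n))\<^sup>2)"
    by (rule summable_finite[OF assms(1)]) (use assms in auto)
  then show ?thesis using assms by (auto simp: l2_def)
qed

lemma basis_l2: "k \<in> I \<Longrightarrow> basis_vec k \<in> l2 I"
  by (rule l2_finite_support[of "{k}"]) (auto simp: basis_vec_def)

lemma vinner_fin:
  assumes "finite J" "\<And>k. k \<notin> J \<Longrightarrow> x k = 0"
  shows "vinner x y = (\<Sum>k\<in>J. cnj (x k) * y k)"
  unfolding vinner_def by (rule suminf_finite) (use assms in auto)

lemma vinner_basis: "vinner (basis_vec n) y = y n"
  by (subst vinner_fin[of "{n}"]) (auto simp: basis_vec_def)

lemma vnorm_sq: "x \<in> l2 I \<Longrightarrow> (vnorm x)\<^sup>2 = (\<Sum>n. (cmod (x n))\<^sup>2)"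
proof -
  assume x: "x \<in> l2 I"
  have "0 \<le> (\<Sum>n. (cmod (x n))\<^sup>2)" by (rule suminf_nonneg[OF l2_summ[OF x]]) simp
  then show ?thesis by (simp add: vnorm_def)
qed

lemma vnorm_nonneg: "x \<in> l2 I \<Longrightarrow> vnorm x \<ge> 0"
  unfolding vnorm_def by (simp add: suminf_nonneg l2_summ)

lemma vinner_self: "x \<in> l2 I \<Longrightarrow> vinner x x = complex_of_real ((vnorm x)\<^sup>2)"
proof -
  assume x: "x \<in> l2 I"
  have "\<And>n. cnj (x n) * x n = complex_of_real ((cmod (x n))\<^sup>2)"
    by (metis complex_norm_square mult.commute)
  then have "(\<lambda>n. cnj (x n) * x n) = (\<lambda>n. complex_of_real ((cmod (x n))\<^sup>2))"
    by auto
  then have "vinner x x = (\<Sum>n. complex_of_real ((cmod (x n))\<^sup>2))" by (simp add: vinner_def)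
  also have "\<dots> = complex_of_real (\<Sum>n. (cmod (x n))\<^sup>2)"
    by (subst suminf_of_real[OF l2_summ[OF x]]) (simp add: of_real_power)
  finally show ?thesis by (simp add: vnorm_sq[OF x])
qed

lemma partial_le_vnorm:
  assumes "x \<in> l2 I" "finite F"
  shows "(\<Sum>n\<in>F. (cmod (x n))\<^sup>2) \<le> (vnorm x)\<^sup>2"
  unfolding vnorm_sq[OF assms(1)] by (rule sum_le_suminf[OF l2_summ[OF assms(1)] assms(2)]) auto

lemma comp_le_vnorm: "x \<in> l2 I \<Longrightarrow> cmod (x n) \<le> vnorm x"
  using partial_le_vnorm[of x I "{n}"] vnorm_nonneg[of x I]
  by (simp add: abs_le_square_iff)

lemma vnorm_fin:
  assumes "finite J" "\<And>k. k \<notin> J \<Longrightarrow> x k = 0"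
  shows "(vnorm x)\<^sup>2 = (\<Sum>k\<in>J. (cmod (x k))\<^sup>2)"
  unfolding vnorm_def by (subst suminf_finite[OF assms(1)]) (use assms in \<open>auto intro: sum_nonneg\<close>)

lemma vinner_lin2:
  assumes "x \<in> l2 I" "y \<in> l2 I" "z \<in> l2 I"
  shows "vinner x (\<lambda>n. a * y n + z n) = a * vinner x y + vinner x z"
proof -
  have "vinner x (\<lambda>n. a * y n + z n) = (\<Sum>n. a * (cnj (x n) * y n) + cnj (x n) * z n)"
    unfolding vinner_def by (simp add: algebra_simps)
  also have "\<dots> = (\<Sum>n. a * (cnj (x n) * y n)) + (\<Sum>n. cnj (x n) * z n)"
    by (rule suminf_add[symmetric]) (use assms vinner_summable in \<open>auto intro: summable_mult\<close>)
  also have "\<dots> = a * vinner x y + vinner x z"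
    unfolding vinner_def by (simp add: suminf_mult vinner_summable[OF assms(1,2)])
  finally show ?thesis .
qed

lemma vinner_cnj:
  assumes "x \<in> l2 I" "y \<in> l2 I"
  shows "vinner y x = cnj (vinner x y)"
proof -
  have "(\<lambda>n. cnj (x n) * y n) sums vinner x y"
    unfolding vinner_def using vinner_summable[OF assms] by (simp add: summable_sums)
  then have "(\<lambda>n. cnj (cnj (x n) * y n)) sums cnj (vinner x y)" by (simp only: sums_cnj)
  then have "(\<lambda>n. cnj (y n) * x n) sums cnj (vinner x y)" by (simp add: mult.commute)
  then show ?thesis unfolding vinner_def by (rule sums_unique[symmetric])
qed

lemma vinner_lin1:
  assumes "x \<in> l2 I" "y \<in> l2 I" "z \<in> l2 I"
  shows "vinner (\<lambda>n. a * x n + y n) z = cnj a * vinner x z + vinner y z"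
proof -
  have "vinner z (\<lambda>n. a * x n + y n) = a * vinner z x + vinner z y"
    by (rule vinner_lin2[OF assms(3,1,2)])
  then have "cnj (vinner z (\<lambda>n. a * x n + y n)) = cnj a * cnj (vinner z x) + cnj (vinner z y)"
    by simp
  then show ?thesis
    using vinner_cnj[OF assms(3) l2_lincomb[OF assms(1,2)]] vinner_cnj[OF assms(3,1)] vinner_cnj[OF assms(3,2)]
    by simp
qed

lemma vinner_CS:
  assumes x: "x \<in> l2 I" and y: "y \<in> l2 I"
  shows "cmod (vinner x y) \<le> vnorm x * vnorm y"
proof -
  let ?A = "\<Sum>n. (cmod (x n))\<^sup>2" and ?B = "\<Sum>n. (cmod (y n))\<^sup>2"
  have sA: "summable (\<lambda>n. (cmod (x n))\<^sup>2)" and sB: "summable (\<lambda>n. (cmod (y n))\<^sup>2)"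
    using x y by (auto intro: l2_summ)
  have A0: "?A \<ge> 0" and B0: "?B \<ge> 0" using sA sB by (auto intro: suminf_nonneg)
  have "cmod (vinner x y) \<le> (\<Sum>n. cmod (x n) * cmod (y n))"
    unfolding vinner_def using summable_norm[OF vinner_abs_summable[OF x y]] by (simp add: norm_mult)
  also have "\<dots> \<le> sqrt ?A * sqrt ?B"
  proof (cases "?A = 0 \<or> ?B = 0")
    case True
    then have "(\<forall>n. x n = 0) \<or> (\<forall>n. y n = 0)"
      using sA sB by (auto simp: suminf_eq_zero_iff)
    then show ?thesis by auto
  next
    case False
    then have Ap: "?A > 0" and Bp: "?B > 0" using A0 B0 by auto
    define t where "t = sqrt ?B / sqrt ?A"
    have tp: "t > 0" using Ap Bp by (simp add: t_def)
    have le: "cmod (x n) * cmod (y n) \<le> (t * (cmod (x n))\<^sup>2 + (cmod (y n))\<^sup>2 / t) / 2" for n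
    proof -
      have "0 \<le> (t * cmod (x n) - cmod (y n))\<^sup>2" by simp
      then have "2 * t * (cmod (x n) * cmod (y n)) \<le> t\<^sup>2 * (cmod (x n))\<^sup>2 + (cmod (y n))\<^sup>2"
        by (simp add: power2_eq_square algebra_simps)
      then show ?thesis using tp by (simp add: field_simps power2_eq_square)
    qed
    have "(\<Sum>n. cmod (x n) * cmod (y n)) \<le> (\<Sum>n. (t * (cmod (x n))\<^sup>2 + (cmod (y n))\<^sup>2 / t) / 2)"
      by (rule suminf_le[OF le summable_cmod_mult[OF x y]]) (intro summable_divide summable_add summable_mult sA sB)
    also have "\<dots> = ((\<Sum>n. t * (cmod (x n))\<^sup>2) + (\<Sum>n. (cmod (y n))\<^sup>2 / t)) / 2"
    proof -
      have s1: "summable (\<lambda>n. t * (cmod (x n))\<^sup>2)" "summable (\<lambda>n. (cmod (y n))\<^sup>2 / t)"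
        by (intro summable_mult summable_divide sA sB)+
      have "(\<Sum>n. (t * (cmod (x n))\<^sup>2 + (cmod (y n))\<^sup>2 / t) / 2) = (\<Sum>n. t * (cmod (x n))\<^sup>2 + (cmod (y n))\<^sup>2 / t) / 2"
        by (rule suminf_divide[OF summable_add[OF s1]])
      also have "(\<Sum>n. t * (cmod (x n))\<^sup>2 + (cmod (y n))\<^sup>2 / t) = (\<Sum>n. t * (cmod (x n))\<^sup>2) + (\<Sum>n. (cmod (y n))\<^sup>2 / t)"
        by (rule suminf_add[symmetric, OF s1])
      finally show ?thesis .
    qed
    also have "\<dots> = (t * ?A + ?B / t) / 2"
      using sA sB by (simp add: suminf_mult suminf_divide)
    also have "\<dots> = sqrt ?A * sqrt ?B"
      using Ap Bp unfolding t_def by (simp add: field_simps)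
    finally show ?thesis .
  qed
  finally show ?thesis by (simp add: vnorm_def)
qed

lemma vnorm_scale: "x \<in> l2 I \<Longrightarrow> vnorm (\<lambda>n. a * x n) = cmod a * vnorm x"
proof -
  assume x: "x \<in> l2 I"
  have "(vnorm (\<lambda>n. a * x n))\<^sup>2 = (\<Sum>n. (cmod a)\<^sup>2 * (cmod (x n))\<^sup>2)"
    using vnorm_sq[OF l2_scale[OF x]] by (simp add: norm_mult power_mult_distrib)
  also have "\<dots> = (cmod a * vnorm x)\<^sup>2"
    by (simp add: suminf_mult l2_summ[OF x] vnorm_sq[OF x] power_mult_distrib)
  finally show ?thesis
    by (metis norm_ge_zero vnorm_nonneg l2_scale x mult_nonneg_nonneg power2_eq_iff_nonneg)
qed

lemma vnorm_triangle:
  assumes x: "x \<in> l2 I" and y: "y \<in> l2 I"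
  shows "vnorm (\<lambda>n. x n + y n) \<le> vnorm x + vnorm y"
proof -
  have s: "(\<lambda>n. x n + y n) \<in> l2 I" using x y by (rule l2_add)
  have "complex_of_real ((vnorm (\<lambda>n. x n + y n))\<^sup>2) = vinner (\<lambda>n. x n + y n) (\<lambda>n. x n + y n)"
    using vinner_self[OF s] by simp
  also have "\<dots> = vinner x x + vinner x y + (vinner y x + vinner y y)"
    using vinner_lin1[OF x y s, of 1] vinner_lin2[OF x x y, of 1] vinner_lin2[OF y x y, of 1] by simp
  finally have e0: "complex_of_real ((vnorm (\<lambda>n. x n + y n))\<^sup>2) = vinner x x + vinner x y + (vinner y x + vinner y y)" .
  have e1: "(vnorm (\<lambda>n. x n + y n))\<^sup>2 = Re (vinner x x) + Re (vinner x y) + (Re (vinner y x) + Re (vinner y y))"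
    using arg_cong[OF e0, of Re] by simp
  have e: "(vnorm (\<lambda>n. x n + y n))\<^sup>2 = (vnorm x)\<^sup>2 + (vnorm y)\<^sup>2 + 2 * Re (vinner x y)"
    unfolding e1 vinner_self[OF x] vinner_self[OF y] vinner_cnj[OF x y] by simp
  have "Re (vinner x y) \<le> vnorm x * vnorm y"
    using vinner_CS[OF x y] complex_Re_le_cmod order_trans by blast
  then have "(vnorm (\<lambda>n. x n + y n))\<^sup>2 \<le> (vnorm x + vnorm y)\<^sup>2"
    using e by (simp add: power2_sum)
  then show ?thesis using vnorm_nonneg x y by (meson add_nonneg_nonneg power2_le_imp_le)
qed

definition blin :: "nat set \<Rightarrow> op \<Rightarrow> real \<Rightarrow> bool" where
  "blin I T c \<longleftrightarrow> c \<ge> 0 \<and> (\<forall>x\<in>l2 I. T x \<in> l2 I)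
     \<and> (\<forall>x\<in>l2 I. \<forall>y\<in>l2 I. \<forall>a. T (\<lambda>n. a * x n + y n) = (\<lambda>n. a * T x n + T y n))
     \<and> (\<forall>x\<in>l2 I. vnorm (T x) \<le> c * vnorm x)"

lemma blin_l2: "blin I T c \<Longrightarrow> x \<in> l2 I \<Longrightarrow> T x \<in> l2 I"
  by (simp add: blin_def)
lemma blin_lin: "blin I T c \<Longrightarrow> x \<in> l2 I \<Longrightarrow> y \<in> l2 I \<Longrightarrow> T (\<lambda>n. a * x n + y n) = (\<lambda>n. a * T x n + T y n)"
  by (simp add: blin_def)
lemma blin_bound: "blin I T c \<Longrightarrow> x \<in> l2 I \<Longrightarrow> vnorm (T x) \<le> c * vnorm x"
  by (simp add: blin_def)
lemma blin_nonneg: "blin I T c \<Longrightarrow> c \<ge> 0"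
  by (simp add: blin_def)

lemma blin_zero: assumes "blin I T c" shows "T vzero = vzero"
proof -
  have "T (\<lambda>n. 1 * vzero n + vzero n) = (\<lambda>n. 1 * T vzero n + T vzero n)"
    using blin_lin[OF assms vzero_l2 vzero_l2] .
  then have "T vzero = (\<lambda>n. T vzero n + T vzero n)" by (simp add: vzero_def)
  then have "\<And>n. T vzero n = 0" by (metis add_cancel_left_left)
  then show ?thesis by (auto simp: vzero_def)
qed

lemma blin_scale: assumes "blin I T c" "x \<in> l2 I" shows "T (\<lambda>n. a * x n) = (\<lambda>n. a * T x n)"
  using blin_lin[OF assms vzero_l2, of a] blin_zero[OF assms(1)] by (simp add: vzero_def)

lemma blin_add: assumes "blin I T c" "x \<in> l2 I" "y \<in> l2 I" shows "T (\<lambda>n. x n + y n) = (\<lambda>n. T x n + T y n)"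
  using blin_lin[OF assms, of 1] by simp

lemma blin_diff: assumes "blin I T c" "x \<in> l2 I" "y \<in> l2 I" shows "T (\<lambda>n. x n - y n) = (\<lambda>n. T x n - T y n)"
  using blin_lin[OF assms(1,3,2), of "-1"] by simp

lemma blin_sum:
  assumes "blin I T c" "finite J" "\<And>j. j \<in> J \<Longrightarrow> v j \<in> l2 I"
  shows "(\<lambda>k. \<Sum>j\<in>J. a j * v j k) \<in> l2 I \<and> T (\<lambda>k. \<Sum>j\<in>J. a j * v j k) = (\<lambda>k. \<Sum>j\<in>J. a j * T (v j) k)"
  using assms(2,3)
proof (induction J rule: finite_induct)
  case empty
  then show ?case using blin_zero[OF assms(1)] by (simp add: vzero_def[symmetric])
next
  case (insert j J)
  then have IH: "(\<lambda>k. \<Sum>j\<in>J. a j * v j k) \<in> l2 I" "T (\<lambda>k. \<Sum>j\<in>J. a j * v j k) = (\<lambda>k. \<Sum>j\<in>J. a j * T (v j) k)"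
    and vj: "v j \<in> l2 I" by auto
  have e: "(\<lambda>k. \<Sum>j\<in>insert j J. a j * v j k) = (\<lambda>k. a j * v j k + (\<Sum>j\<in>J. a j * v j k))"
    using insert by simp
  show ?case unfolding e
    using l2_lincomb[OF vj IH(1)] blin_lin[OF assms(1) vj IH(1), of "a j"] IH(2) insert by simp
qed

lemma vnorm_zero_iff: assumes "x \<in> l2 I" shows "vnorm x = 0 \<longleftrightarrow> x = vzero"
proof
  assume "vnorm x = 0"
  then have "(\<Sum>n. (cmod (x n))\<^sup>2) = 0" using vnorm_sq[OF assms] by simp
  then have "\<forall>n. (cmod (x n))\<^sup>2 = 0" using l2_summ[OF assms] by (simp add: suminf_eq_zero_iff)
  then show "x = vzero" by (auto simp: vzero_def)
qed (simp add: vnorm_def vzero_def)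

lemma bop_blin:
  assumes T: "T \<in> bop I"
  shows "blin I T (opnorm I T)"
proof -
  have l2T: "\<And>x. x \<in> l2 I \<Longrightarrow> T x \<in> l2 I" and lin: "\<forall>x\<in>l2 I. \<forall>y\<in>l2 I. \<forall>a. T (\<lambda>n. a * x n + y n) = (\<lambda>n. a * T x n + T y n)"
    using T by (auto simp: bop_def)
  obtain C where C: "\<And>x. x \<in> l2 I \<Longrightarrow> vnorm (T x) \<le> C * vnorm x" using T unfolding bop_def by blast
  let ?S = "(\<lambda>x. vnorm (T x)) ` {x \<in> l2 I. vnorm x \<le> 1}"
  have bdd: "bdd_above ?S"
  proof (rule bdd_aboveI)
    fix s assume "s \<in> ?S"
    then obtain x where x: "x \<in> l2 I" "vnorm x \<le> 1" "s = vnorm (T x)" by auto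
    have "C * vnorm x \<le> max C 0"
      using x vnorm_nonneg[OF x(1)] by (cases "C \<ge> 0") (auto intro: mult_left_le mult_nonpos_nonneg)
    then show "s \<le> max C 0" using C[OF x(1)] x by linarith
  qed
  have le1: "vnorm (T x) \<le> opnorm I T" if "x \<in> l2 I" "vnorm x \<le> 1" for x
    unfolding opnorm_def by (rule cSup_upper[OF _ bdd]) (use that in auto)
  have v01: "vnorm vzero \<le> 1" by (simp add: vnorm_def vzero_def)
  have nn: "opnorm I T \<ge> 0"
    using le1[OF vzero_l2 v01] vnorm_nonneg[OF l2T[OF vzero_l2]] by linarith
  have b: "vnorm (T x) \<le> opnorm I T * vnorm x" if x: "x \<in> l2 I" for x
  proof (cases "vnorm x = 0")
    case True
    then have "x = vzero" using vnorm_zero_iff[OF x] by simp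
    moreover have "T vzero = vzero"
    proof -
      have "T (\<lambda>n. 1 * vzero n + vzero n) = (\<lambda>n. 1 * T vzero n + T vzero n)" using lin vzero_l2 by blast
      then have "T vzero = (\<lambda>n. T vzero n + T vzero n)" by (simp add: vzero_def)
      then have "\<And>n. T vzero n = 0" by (metis add_cancel_left_left)
      then show ?thesis by (auto simp: vzero_def)
    qed
    ultimately show ?thesis by (simp add: vnorm_def vzero_def)
  next
    case False
    then have p: "vnorm x > 0" using vnorm_nonneg[OF x] by simp
    let ?a = "complex_of_real (1 / vnorm x)"
    have y: "(\<lambda>n. ?a * x n) \<in> l2 I" by (rule l2_scale[OF x])
    have Ty: "T (\<lambda>n. ?a * x n) = (\<lambda>n. ?a * T x n)"
    proof -
      have Tz: "T vzero = vzero"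
      proof -
        have "T (\<lambda>n. 1 * vzero n + vzero n) = (\<lambda>n. 1 * T vzero n + T vzero n)" using lin vzero_l2 by blast
        then have "T vzero = (\<lambda>n. T vzero n + T vzero n)" by (simp add: vzero_def)
        then have "\<And>n. T vzero n = 0" by (metis add_cancel_left_left)
        then show ?thesis by (auto simp: vzero_def)
      qed
      have "T (\<lambda>n. ?a * x n + vzero n) = (\<lambda>n. ?a * T x n + T vzero n)" using lin x vzero_l2 by blast
      then show ?thesis unfolding Tz by (simp add: vzero_def)
    qed
    have na: "cmod ?a = 1 / vnorm x" using p by (simp add: norm_divide)
    have "vnorm (\<lambda>n. ?a * x n) = 1" using vnorm_scale[OF x, of ?a] p unfolding na by simp
    then have "vnorm (T (\<lambda>n. ?a * x n)) \<le> opnorm I T" using le1[OF y] by simp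
    then have "vnorm (T x) / vnorm x \<le> opnorm I T"
      using vnorm_scale[OF l2T[OF x], of ?a] Ty p unfolding na by (simp add: mult.commute)
    then show ?thesis using p by (simp add: divide_le_eq mult.commute)
  qed
  show ?thesis unfolding blin_def using nn l2T lin b by blast
qed

lemma sq_le_from_sqrt:
  fixes S k :: real
  assumes "S \<le> k * sqrt S" "S \<ge> 0" "k \<ge> 0"
  shows "S \<le> k\<^sup>2"
proof (cases "S = 0")
  case True then show ?thesis by simp
next
  case False
  then have "sqrt S > 0" using assms by simp
  have "sqrt S * sqrt S \<le> k * sqrt S" using assms by simp
  then have "sqrt S \<le> k" using \<open>sqrt S > 0\<close> by (metis mult_right_le_imp_le)
  then have "(sqrt S)\<^sup>2 \<le> k\<^sup>2" using \<open>sqrt S > 0\<close> by (intro power_mono) auto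
  then show ?thesis using assms by (simp add: real_sqrt_pow2)
qed

lemma vinner_sum:
  assumes "d \<in> l2 I" "finite J" "\<And>j. j \<in> J \<Longrightarrow> w j \<in> l2 I"
  shows "(\<lambda>k. \<Sum>j\<in>J. a j * w j k) \<in> l2 I \<and> vinner d (\<lambda>k. \<Sum>j\<in>J. a j * w j k) = (\<Sum>j\<in>J. a j * vinner d (w j))"
  using assms(2,3)
proof (induction J rule: finite_induct)
  case empty
  then show ?case using vzero_l2[of I] by (simp add: vinner_def vzero_def)
next
  case (insert j J)
  then have IH: "(\<lambda>k. \<Sum>j\<in>J. a j * w j k) \<in> l2 I" "vinner d (\<lambda>k. \<Sum>j\<in>J. a j * w j k) = (\<Sum>j\<in>J. a j * vinner d (w j))"
    and wj: "w j \<in> l2 I" by auto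
  have e: "(\<lambda>k. \<Sum>j\<in>insert j J. a j * w j k) = (\<lambda>k. a j * w j k + (\<Sum>j\<in>J. a j * w j k))"
    using insert by simp
  show ?case unfolding e
    using l2_lincomb[OF wj IH(1)] vinner_lin2[OF assms(1) wj IH(1), of "a j"] IH(2) insert by simp
qed

lemma blin_cont:
  assumes "blin I T c" "x \<in> l2 I" "y \<in> l2 I"
  shows "vnorm (\<lambda>n. T x n - T y n) \<le> c * vnorm (\<lambda>n. x n - y n)"
  using blin_bound[OF assms(1) l2_diff[OF assms(2,3)]] blin_diff[OF assms] by simp

definition trunc :: "nat \<Rightarrow> vec \<Rightarrow> vec" where
  "trunc K x = (\<lambda>n. if n < K then x n else 0)"

lemma trunc_sum:
  assumes "x \<in> l2 I"
  shows "trunc K x = (\<lambda>k. \<Sum>j\<in>I \<inter> {..<K}. x j * basis_vec j k)"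
proof
  fix k
  have "(\<Sum>j\<in>I \<inter> {..<K}. x j * basis_vec j k) = (if k \<in> I \<inter> {..<K} then x k else 0)"
    by (simp add: basis_vec_def if_distrib[of "\<lambda>t. x _ * t"] cong: if_cong)
  then show "trunc K x k = (\<Sum>j\<in>I \<inter> {..<K}. x j * basis_vec j k)"
    using l2_zero[OF assms] by (auto simp: trunc_def)
qed

lemma trunc_l2: "x \<in> l2 I \<Longrightarrow> trunc K x \<in> l2 I"
  by (rule l2_finite_support[of "I \<inter> {..<K}"]) (auto simp: trunc_def l2_zero)

lemma trunc_vnorm_le: assumes "x \<in> l2 I" shows "vnorm (trunc K x) \<le> vnorm x"
proof -
  have "(vnorm (trunc K x))\<^sup>2 = (\<Sum>k\<in>{..<K}. (cmod (x k))\<^sup>2)"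
    by (subst vnorm_fin[of "{..<K}"]) (auto simp: trunc_def)
  also have "\<dots> \<le> (vnorm x)\<^sup>2" by (rule partial_le_vnorm[OF assms]) simp
  finally show ?thesis by (rule power2_le_imp_le[OF _ vnorm_nonneg[OF assms]])
qed

lemma trunc_conv:
  assumes x: "x \<in> l2 I"
  shows "(\<lambda>K. vnorm (\<lambda>n. x n - trunc K x n)) \<longlonglongrightarrow> 0"
proof -
  let ?f = "\<lambda>n. (cmod (x n))\<^sup>2"
  have s: "summable ?f" by (rule l2_summ[OF x])
  have d: "(\<lambda>n. x n - trunc K x n) \<in> l2 I" for K by (rule l2_diff[OF x trunc_l2[OF x]])
  have eq: "(vnorm (\<lambda>n. x n - trunc K x n))\<^sup>2 = suminf ?f - (\<Sum>i<K. ?f i)" for K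
  proof -
    have "(vnorm (\<lambda>n. x n - trunc K x n))\<^sup>2 = (\<Sum>n. (cmod (x n - trunc K x n))\<^sup>2)"
      by (rule vnorm_sq[OF d])
    also have "(\<lambda>n. (cmod (x n - trunc K x n))\<^sup>2) = (\<lambda>n. ?f n - (if n < K then ?f n else 0))"
      by (auto simp: trunc_def)
    also have "(\<Sum>n. ?f n - (if n < K then ?f n else 0)) = suminf ?f - (\<Sum>n. if n < K then ?f n else 0)"
      by (rule suminf_diff[symmetric, OF s]) (rule summable_finite[of "{..<K}"], auto)
    also have "(\<Sum>n. if n < K then ?f n else 0) = (\<Sum>i<K. ?f i)"
      by (subst suminf_finite[of "{..<K}"]) auto
    finally show ?thesis .
  qed
  have "(\<lambda>K. suminf ?f - (\<Sum>i<K. ?f i)) \<longlonglongrightarrow> suminf ?f - suminf ?f"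
    by (intro tendsto_diff tendsto_const summable_LIMSEQ[OF s])
  then have "(\<lambda>K. (vnorm (\<lambda>n. x n - trunc K x n))\<^sup>2) \<longlonglongrightarrow> 0" by (simp add: eq)
  then have "(\<lambda>K. sqrt ((vnorm (\<lambda>n. x n - trunc K x n))\<^sup>2)) \<longlonglongrightarrow> sqrt 0" by (rule tendsto_real_sqrt)
  then show ?thesis using vnorm_nonneg[OF d] by simp
qed

lemma blin_trunc_conv:
  assumes T: "blin I T c" and z: "z \<in> l2 I"
  shows "(\<lambda>K. T (trunc K z) n) \<longlonglongrightarrow> T z n"
proof -
  have b: "cmod (T (trunc K z) n - T z n) \<le> c * vnorm (\<lambda>m. z m - trunc K z m)" for K
  proof -
    have "cmod (T z n - T (trunc K z) n) \<le> vnorm (\<lambda>m. T z m - T (trunc K z) m)"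
      using comp_le_vnorm[OF l2_diff[OF blin_l2[OF T z] blin_l2[OF T trunc_l2[OF z]]]] by simp
    also have "\<dots> \<le> c * vnorm (\<lambda>m. z m - trunc K z m)" by (rule blin_cont[OF T z trunc_l2[OF z]])
    finally show ?thesis by (simp add: norm_minus_commute)
  qed
  have "(\<lambda>K. c * vnorm (\<lambda>m. z m - trunc K z m)) \<longlonglongrightarrow> c * 0"
    by (intro tendsto_mult tendsto_const trunc_conv[OF z])
  then have g0: "(\<lambda>K. c * vnorm (\<lambda>m. z m - trunc K z m)) \<longlonglongrightarrow> 0" by simp
  have ev: "\<forall>\<^sub>F K in sequentially. norm (T (trunc K z) n - T z n) \<le> c * vnorm (\<lambda>m. z m - trunc K z m)"
    by (rule always_eventually) (use b in blast)
  have "(\<lambda>K. T (trunc K z) n - T z n) \<longlonglongrightarrow> 0"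
    by (rule Lim_null_comparison[OF ev g0])
  then show ?thesis by (simp add: LIM_zero_iff)
qed

definition row :: "nat set \<Rightarrow> op \<Rightarrow> nat \<Rightarrow> vec" where
  "row I T n = (\<lambda>k. if k \<in> I then cnj (T (basis_vec k) n) else 0)"

lemma row_partial:
  assumes T: "blin I T c" and J: "finite J" "J \<subseteq> I"
  shows "(\<Sum>k\<in>J. (cmod (T (basis_vec k) n))\<^sup>2) \<le> c\<^sup>2"
proof -
  let ?S = "\<Sum>k\<in>J. (cmod (T (basis_vec k) n))\<^sup>2"
  define v where "v = (\<lambda>m. \<Sum>k\<in>J. cnj (T (basis_vec k) n) * basis_vec k m)"
  have bl: "\<And>k. k \<in> J \<Longrightarrow> basis_vec k \<in> l2 I" using J by (auto intro: basis_l2)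
  have vs: "v \<in> l2 I" "T v = (\<lambda>m. \<Sum>k\<in>J. cnj (T (basis_vec k) n) * T (basis_vec k) m)"
    using blin_sum[OF T J(1) bl] unfolding v_def by auto
  have vk: "v m = (if m \<in> J then cnj (T (basis_vec m) n) else 0)" for m
    unfolding v_def basis_vec_def using J by (simp add: if_distrib[of "\<lambda>t. _ * t"] cong: if_cong)
  have nv: "(vnorm v)\<^sup>2 = ?S" by (subst vnorm_fin[OF J(1)]) (auto simp: vk)
  have tt: "\<And>k. cnj (T (basis_vec k) n) * T (basis_vec k) n = complex_of_real ((cmod (T (basis_vec k) n))\<^sup>2)"
    by (metis complex_norm_square mult.commute)
  have Tvn: "T v n = of_real ?S"
    unfolding vs(2) tt by simp
  have "?S \<le> c * vnorm v"
  proof -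
    have "?S = cmod (T v n)" unfolding Tvn norm_of_real by (simp add: sum_nonneg)
    also have "\<dots> \<le> vnorm (T v)" by (rule comp_le_vnorm[OF blin_l2[OF T vs(1)]])
    also have "\<dots> \<le> c * vnorm v" by (rule blin_bound[OF T vs(1)])
    finally show ?thesis .
  qed
  also have "vnorm v = sqrt ?S" using nv vnorm_nonneg[OF vs(1)] by (metis real_sqrt_unique)
  finally show ?thesis by (rule sq_le_from_sqrt) (auto intro: sum_nonneg blin_nonneg[OF T])
qed

lemma row_l2: assumes T: "blin I T c" shows "row I T n \<in> l2 I"
proof -
  have "summable (\<lambda>k. (cmod (row I T n k))\<^sup>2)"
  proof (rule summableI_nonneg_bounded)
    fix K
    have "(\<Sum>k<K. (cmod (row I T n k))\<^sup>2) = (\<Sum>k\<in>I \<inter> {..<K}. (cmod (T (basis_vec k) n))\<^sup>2)"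
      by (rule sum.mono_neutral_cong_right) (auto simp: row_def)
    also have "\<dots> \<le> c\<^sup>2" by (rule row_partial[OF T]) auto
    finally show "(\<Sum>k<K. (cmod (row I T n k))\<^sup>2) \<le> c\<^sup>2" .
  qed simp
  then show ?thesis by (auto simp: l2_def row_def)
qed

lemma row_repr:
  assumes T: "blin I T c" and z: "z \<in> l2 I"
  shows "T z n = vinner (row I T n) z"
proof -
  have "T (trunc K z) n = (\<Sum>k<K. cnj (row I T n k) * z k)" for K
  proof -
    have bl: "\<And>k. k \<in> I \<inter> {..<K} \<Longrightarrow> basis_vec k \<in> l2 I" by (auto intro: basis_l2)
    have fin: "finite (I \<inter> {..<K})" by simp
    have "T (trunc K z) n = (\<Sum>j\<in>I \<inter> {..<K}. z j * T (basis_vec j) n)"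
      unfolding trunc_sum[OF z] using blin_sum[OF T fin bl, where a=z] by simp
    also have "\<dots> = (\<Sum>k<K. cnj (row I T n k) * z k)"
      by (rule sum.mono_neutral_cong_left) (auto simp: row_def l2_zero[OF z])
    finally show ?thesis .
  qed
  moreover have "(\<lambda>K. \<Sum>k<K. cnj (row I T n k) * z k) \<longlonglongrightarrow> vinner (row I T n) z"
    unfolding vinner_def by (rule summable_LIMSEQ[OF vinner_summable[OF row_l2[OF T] z]])
  ultimately have "(\<lambda>K. T (trunc K z) n) \<longlonglongrightarrow> vinner (row I T n) z" by simp
  then show ?thesis using blin_trunc_conv[OF T z] LIMSEQ_unique by blast
qed

lemma row_frame:
  assumes T: "blin I T c" and d: "d \<in> l2 I" and F: "finite F"
  shows "(\<Sum>n\<in>F. (cmod (vinner d (row I T n)))\<^sup>2) \<le> c\<^sup>2 * (vnorm d)\<^sup>2"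
proof -
  have "vinner d (row I T n) = cnj (T d n)" for n
    using row_repr[OF T d, of n] vinner_cnj[OF row_l2[OF T] d] by simp
  then have "(\<Sum>n\<in>F. (cmod (vinner d (row I T n)))\<^sup>2) = (\<Sum>n\<in>F. (cmod (T d n))\<^sup>2)" by simp
  also have "\<dots> \<le> (vnorm (T d))\<^sup>2" by (rule partial_le_vnorm[OF blin_l2[OF T d] F])
  also have "\<dots> \<le> (c * vnorm d)\<^sup>2"
    using blin_bound[OF T d] vnorm_nonneg[OF blin_l2[OF T d]] by (simp add: power_mono)
  finally show ?thesis by (simp add: power_mult_distrib)
qed

lemma col_frame:
  assumes B: "blin I B c" and d: "d \<in> l2 I" and F: "finite F" "F \<subseteq> I"
  shows "(\<Sum>n\<in>F. (cmod (vinner d (B (basis_vec n))))\<^sup>2) \<le> c\<^sup>2 * (vnorm d)\<^sup>2"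
proof -
  define s where "s n = vinner d (B (basis_vec n))" for n
  let ?S = "\<Sum>n\<in>F. (cmod (s n))\<^sup>2"
  define v where "v = (\<lambda>m. \<Sum>n\<in>F. cnj (s n) * basis_vec n m)"
  have bl: "\<And>k. k \<in> F \<Longrightarrow> basis_vec k \<in> l2 I" using F by (auto intro: basis_l2)
  have vs: "v \<in> l2 I" "B v = (\<lambda>m. \<Sum>n\<in>F. cnj (s n) * B (basis_vec n) m)"
    using blin_sum[OF B F(1) bl] unfolding v_def by auto
  have vk: "v m = (if m \<in> F then cnj (s m) else 0)" for m
    unfolding v_def basis_vec_def using F by (simp add: if_distrib[of "\<lambda>t. _ * t"] cong: if_cong)
  have nv: "(vnorm v)\<^sup>2 = ?S" by (subst vnorm_fin[OF F(1)]) (auto simp: vk)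
  have vnv: "vnorm v = sqrt ?S" using nv vnorm_nonneg[OF vs(1)] by (metis real_sqrt_unique)
  have bBl: "\<And>n. n \<in> F \<Longrightarrow> B (basis_vec n) \<in> l2 I" using bl blin_l2[OF B] by auto
  have "vinner d (B v) = (\<Sum>n\<in>F. cnj (s n) * s n)"
    unfolding vs(2) using vinner_sum[OF d F(1) bBl, where a="\<lambda>n. cnj (s n)"] by (simp add: s_def)
  also have "\<dots> = of_real ?S"
  proof -
    have "\<And>n. cnj (s n) * s n = complex_of_real ((cmod (s n))\<^sup>2)" by (metis complex_norm_square mult.commute)
    then show ?thesis by simp
  qed
  finally have eq: "vinner d (B v) = of_real ?S" .
  have "?S = cmod (vinner d (B v))" unfolding eq norm_of_real by (simp add: sum_nonneg)
  also have "\<dots> \<le> vnorm d * vnorm (B v)" by (rule vinner_CS[OF d blin_l2[OF B vs(1)]])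
  also have "\<dots> \<le> vnorm d * (c * vnorm v)"
    by (rule mult_left_mono[OF blin_bound[OF B vs(1)] vnorm_nonneg[OF d]])
  finally have "?S \<le> vnorm d * (c * sqrt ?S)" unfolding vnv .
  then have "?S \<le> (c * vnorm d) * sqrt ?S" by (simp add: mult_ac)
  then have "?S \<le> (c * vnorm d)\<^sup>2"
    by (rule sq_le_from_sqrt) (auto intro!: sum_nonneg mult_nonneg_nonneg blin_nonneg[OF B] vnorm_nonneg[OF d])
  then show ?thesis by (simp add: s_def power_mult_distrib)
qed

definition bf :: "nat set \<Rightarrow> (nat \<Rightarrow> nat \<Rightarrow> complex) \<Rightarrow> (nat \<Rightarrow> complex) \<Rightarrow> (nat \<Rightarrow> complex) \<Rightarrow> complex" where
  "bf J M x y = (\<Sum>k\<in>J. \<Sum>i\<in>J. cnj (x k) * M k i * y i)"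

definition psd :: "nat set \<Rightarrow> (nat \<Rightarrow> nat \<Rightarrow> complex) \<Rightarrow> bool" where
  "psd J M \<longleftrightarrow> (\<forall>d. Im (bf J M d d) = 0 \<and> 0 \<le> Re (bf J M d d))"

definition tr2 :: "nat set \<Rightarrow> (nat \<Rightarrow> nat \<Rightarrow> complex) \<Rightarrow> (nat \<Rightarrow> nat \<Rightarrow> complex) \<Rightarrow> complex" where
  "tr2 J W N = (\<Sum>k\<in>J. \<Sum>i\<in>J. W k i * N i k)"

lemma bf_support:
  assumes "finite J" "J' \<subseteq> J" "\<And>k. k \<notin> J' \<Longrightarrow> x k = 0" "\<And>k. k \<notin> J' \<Longrightarrow> y k = 0"
  shows "bf J M x y = bf J' M x y"
proof -
  have "bf J M x y = (\<Sum>k\<in>J'. \<Sum>i\<in>J. cnj (x k) * M k i * y i)"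
    unfolding bf_def by (rule sum.mono_neutral_right) (use assms in auto)
  also have "\<dots> = bf J' M x y"
    unfolding bf_def by (rule sum.cong[OF refl], rule sum.mono_neutral_right) (use assms in \<open>auto intro: finite_subset\<close>)
  finally show ?thesis .
qed

lemma bf_cong: "(\<And>k. k \<in> J \<Longrightarrow> x k = x' k) \<Longrightarrow> (\<And>k. k \<in> J \<Longrightarrow> y k = y' k) \<Longrightarrow> bf J M x y = bf J M x' y'"
  unfolding bf_def by (intro sum.cong) auto

lemma psd_subset:
  assumes "finite J" "J' \<subseteq> J" "psd J M" shows "psd J' M"
  unfolding psd_def
proof
  fix d :: "nat \<Rightarrow> complex"
  let ?d = "\<lambda>k. if k \<in> J' then d k else 0"
  have "bf J M ?d ?d = bf J' M ?d ?d" by (rule bf_support) (use assms in auto)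
  also have "\<dots> = bf J' M d d" by (rule bf_cong) auto
  finally show "Im (bf J' M d d) = 0 \<and> 0 \<le> Re (bf J' M d d)" using assms(3) unfolding psd_def by metis
qed

lemma bf_one:
  assumes "finite J" "k \<in> J"
  shows "bf J M (\<lambda>j. if j = k then a else 0) (\<lambda>j. if j = k then a else 0) = cnj a * M k k * a"
proof -
  have "bf J M (\<lambda>j. if j = k then a else 0) (\<lambda>j. if j = k then a else 0) =
        bf {k} M (\<lambda>j. if j = k then a else 0) (\<lambda>j. if j = k then a else 0)"
    by (rule bf_support) (use assms in auto)
  then show ?thesis by (simp add: bf_def)
qed

lemma bf_two:
  assumes "finite J" "k \<in> J" "i \<in> J" "k \<noteq> i"
  shows "bf J M (\<lambda>j. if j = k then a else if j = i then b else 0) (\<lambda>j. if j = k then a else if j = i then b else 0)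
    = cnj a * M k k * a + cnj a * M k i * b + cnj b * M i k * a + cnj b * M i i * b"
proof -
  let ?d = "\<lambda>j. if j = k then a else if j = i then b else 0"
  have "bf J M ?d ?d = bf {k, i} M ?d ?d"
    by (rule bf_support) (use assms in auto)
  then show ?thesis using assms(4) by (simp add: bf_def algebra_simps)
qed

lemma psd_diag: assumes "psd J M" "finite J" "k \<in> J" shows "Im (M k k) = 0" "Re (M k k) \<ge> 0"
  using assms(1) bf_one[OF assms(2,3), where M=M and a=1] unfolding psd_def by (metis complex_cnj_one mult_1 mult_1_right)+

lemma psd_herm:
  assumes P: "psd J M" and J: "finite J" "k \<in> J" "i \<in> J"
  shows "M i k = cnj (M k i)"
proof (cases "k = i")
  case True
  then show ?thesis using psd_diag[OF P J(1,2)] by (simp add: complex_eq_iff)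
next
  case False
  have d1: "Im (M k k) = 0" "Im (M i i) = 0" using psd_diag[OF P J(1)] J by auto
  have "Im (bf J M (\<lambda>j. if j = k then 1 else if j = i then 1 else 0) (\<lambda>j. if j = k then 1 else if j = i then 1 else 0)) = 0"
    using P unfolding psd_def by blast
  then have a: "Im (M k i) + Im (M i k) = 0" using bf_two[OF J False, where a=1 and b=1 and M=M] d1 by simp
  have "Im (bf J M (\<lambda>j. if j = k then 1 else if j = i then \<i> else 0) (\<lambda>j. if j = k then 1 else if j = i then \<i> else 0)) = 0"
    using P unfolding psd_def by blast
  then have b: "Re (M k i) - Re (M i k) = 0" using bf_two[OF J False, where a=1 and b=\<i> and M=M] d1 by simp
  show ?thesis using a b by (simp add: complex_eq_iff)
qed

lemma psd_zero_row:
  assumes P: "psd J M" and J: "finite J" "m \<in> J" "i \<in> J" and z: "M m m = 0"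
  shows "M m i = 0"
proof (rule ccontr)
  assume ne: "M m i \<noteq> 0"
  then have im: "i \<noteq> m" using z by auto
  let ?p = "M m i"
  have h: "M i m = cnj ?p" by (rule psd_herm[OF P J(1,2,3)])
  define t where "t = (Re (M i i) + 1) / (2 * (cmod ?p)\<^sup>2)"
  have tp: "2 * t * (cmod ?p)\<^sup>2 = Re (M i i) + 1" using ne by (simp add: t_def)
  let ?a = "- (complex_of_real t * ?p)"
  have "0 \<le> Re (bf J M (\<lambda>j. if j = m then ?a else if j = i then 1 else 0) (\<lambda>j. if j = m then ?a else if j = i then 1 else 0))"
    using P unfolding psd_def by blast
  also have "bf J M (\<lambda>j. if j = m then ?a else if j = i then 1 else 0) (\<lambda>j. if j = m then ?a else if j = i then 1 else 0)
      = cnj ?a * ?p + cnj ?p * ?a + M i i"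
    using bf_two[OF J(1,2,3) im[symmetric], where a="?a" and b=1 and M=M] z h by simp
  also have "Re (cnj ?a * ?p + cnj ?p * ?a + M i i) = - 2 * t * (cmod ?p)\<^sup>2 + Re (M i i)"
    using cmod_power2[of ?p] by (simp add: algebra_simps power2_eq_square)
  finally show False using tp by linarith
qed

lemma bf_add_right: "bf J M x (\<lambda>j. y j + z j) = bf J M x y + bf J M x z"
  unfolding bf_def by (simp add: algebra_simps sum.distrib)
lemma bf_add_left: "bf J M (\<lambda>j. y j + z j) x = bf J M y x + bf J M z x"
  unfolding bf_def by (simp add: algebra_simps sum.distrib)

lemma bf_delta_right:
  assumes "finite J" "m \<in> J"
  shows "bf J M x (\<lambda>j. if j = m then t else 0) = (\<Sum>k\<in>J. cnj (x k) * M k m) * t"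
  unfolding bf_def using assms by (simp add: if_distrib[of "\<lambda>s. _ * s"] sum_distrib_right cong: if_cong)

lemma bf_delta_left:
  assumes "finite J" "m \<in> J"
  shows "bf J M (\<lambda>j. if j = m then t else 0) y = cnj t * (\<Sum>i\<in>J. M m i * y i)"
  unfolding bf_def
proof -
  have "\<And>k. (\<Sum>i\<in>J. cnj (if k = m then t else 0) * M k i * y i) = (if k = m then cnj t * (\<Sum>i\<in>J. M m i * y i) else 0)"
    by (simp add: sum_distrib_left mult.assoc)
  then show "(\<Sum>k\<in>J. \<Sum>i\<in>J. cnj (if k = m then t else 0) * M k i * y i) = cnj t * (\<Sum>i\<in>J. M m i * y i)"
    using assms by simp
qed

lemma psd_schur:
  assumes P: "psd J M" and J: "finite J" "m \<in> J" and r: "M m m = complex_of_real r" "r > 0"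
  shows "psd J (\<lambda>k i. M k i - M k m * M m i / M m m)"
  unfolding psd_def
proof
  fix d :: "nat \<Rightarrow> complex"
  let ?M' = "\<lambda>k i. M k i - M k m * M m i / M m m"
  define b where "b = (\<Sum>i\<in>J. M m i * d i)"
  have cb: "(\<Sum>k\<in>J. cnj (d k) * M k m) = cnj b"
  proof -
    have "(\<Sum>k\<in>J. cnj (d k) * M k m) = (\<Sum>k\<in>J. cnj (M m k * d k))"
      by (rule sum.cong) (auto simp: psd_herm[OF P J(1,2)] mult.commute)
    then show ?thesis by (simp add: b_def)
  qed
  have e1: "bf J ?M' d d = bf J M d d - cnj b * b / M m m"
  proof -
    have "bf J ?M' d d = bf J M d d - (\<Sum>k\<in>J. \<Sum>i\<in>J. (cnj (d k) * M k m) * (M m i * d i) / M m m)"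
      unfolding bf_def by (simp add: algebra_simps sum_subtractf)
    also have "(\<Sum>k\<in>J. \<Sum>i\<in>J. (cnj (d k) * M k m) * (M m i * d i) / M m m) = (\<Sum>k\<in>J. cnj (d k) * M k m) * b / M m m"
      by (simp add: b_def sum_product sum_divide_distrib mult.assoc)
    finally show ?thesis using cb by simp
  qed
  define t where "t = - b / M m m"
  define d2 where "d2 = (\<lambda>j. d j + (if j = m then t else 0))"
  have e2: "bf J M d2 d2 = bf J M d d + cnj b * t + cnj t * b + cnj t * M m m * t"
  proof -
    have "\<And>k. cnj (if k = m then t else 0) * M k m = (if k = m then cnj t * M m m else 0)" by simp
    then have dd: "(\<Sum>k\<in>J. cnj (if k = m then t else 0) * M k m) = cnj t * M m m" using J by simp
    show ?thesis
      unfolding d2_def bf_add_left bf_add_right bf_delta_right[OF J] bf_delta_left[OF J] cb dd b_def[symmetric]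
      by (simp add: mult.commute)
  qed
  have bb: "cnj b * b = complex_of_real ((cmod b)\<^sup>2)" by (metis complex_norm_square mult.commute)
  have e3: "bf J M d2 d2 = bf J M d d - complex_of_real ((cmod b)\<^sup>2 / r)"
  proof -
    have r0: "complex_of_real r \<noteq> 0" using r by simp
    have t: "t = - b / complex_of_real r" using r by (simp add: t_def)
    have ct: "cnj t = - cnj b / complex_of_real r" using t by simp
    have x1: "cnj b * t = - (cnj b * b) / complex_of_real r" by (simp add: t)
    have x2: "cnj t * b = - (cnj b * b) / complex_of_real r" by (simp add: ct)
    have x3: "cnj t * M m m * t = (cnj b * b) / complex_of_real r"
    proof -
      have "cnj t * M m m = - cnj b" unfolding ct r(1) using r0 by (simp add: divide_inverse)
      then have "cnj t * M m m * t = - cnj b * t" by simp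
      also have "\<dots> = (cnj b * b) / complex_of_real r" unfolding t by simp
      finally show ?thesis .
    qed
    show ?thesis unfolding e2 x1 x2 x3 bb by (simp add: diff_divide_distrib)
  qed
  have p1: "0 \<le> Re (bf J M d2 d2)" and p2: "Im (bf J M d d) = 0" using P unfolding psd_def by auto
  have q: "cnj b * b / M m m = complex_of_real ((cmod b)\<^sup>2 / r)"
    unfolding bb r(1) by simp
  have i: "Im (bf J M d d - complex_of_real ((cmod b)\<^sup>2 / r)) = 0" using p2 by simp
  have rr: "0 \<le> Re (bf J M d d - complex_of_real ((cmod b)\<^sup>2 / r))" using p1 unfolding e3 .
  show "Im (bf J ?M' d d) = 0 \<and> 0 \<le> Re (bf J ?M' d d)"
    unfolding e1 q using i rr by blast
qed

lemma tr2_drop: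
  assumes "finite J" "m \<notin> J" "\<And>i. i \<in> insert m J \<Longrightarrow> X m i = 0" "\<And>k. k \<in> insert m J \<Longrightarrow> X k m = 0"
  shows "tr2 (insert m J) X N = tr2 J X N"
proof -
  have "tr2 (insert m J) X N = (\<Sum>k\<in>insert m J. \<Sum>i\<in>J. X k i * N i k)"
    unfolding tr2_def
  proof (rule sum.cong[OF refl])
    fix k assume k: "k \<in> insert m J"
    show "(\<Sum>i\<in>insert m J. X k i * N i k) = (\<Sum>i\<in>J. X k i * N i k)"
      using assms(1,2) assms(4)[OF k] by (simp add: sum.insert)
  qed
  also have "\<dots> = (\<Sum>i\<in>J. X m i * N i m) + tr2 J X N"
    unfolding tr2_def using assms(1,2) by (simp add: sum.insert)
  also have "(\<Sum>i\<in>J. X m i * N i m) = 0"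
    by (rule sum.neutral) (use assms(3) in auto)
  finally show ?thesis by simp
qed

lemma fm_psd:
  assumes "finite J"
  shows "psd J W \<Longrightarrow> psd J N \<Longrightarrow> 0 \<le> Re (tr2 J W N)"
  using assms
proof (induction J arbitrary: W rule: finite_induct)
  case empty
  then show ?case by (simp add: tr2_def)
next
  case (insert m J)
  let ?J = "insert m J"
  have fJ: "finite ?J" using insert by simp
  have mJ: "m \<in> ?J" by simp
  have PN: "psd J N" by (rule psd_subset[OF fJ _ insert.prems(2)]) auto
  have d: "Im (W m m) = 0" "Re (W m m) \<ge> 0" using psd_diag[OF insert.prems(1) fJ mJ] by auto
  show ?case
  proof (cases "Re (W m m) = 0")
    case True
    then have z: "W m m = 0" using d by (simp add: complex_eq_iff)
    have r: "W m i = 0" if "i \<in> ?J" for i by (rule psd_zero_row[OF insert.prems(1) fJ mJ that z])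
    have c: "W k m = 0" if "k \<in> ?J" for k
      using psd_herm[OF insert.prems(1) fJ that mJ] r[OF that] by simp
    have "tr2 ?J W N = tr2 J W N"
      by (rule tr2_drop[OF insert(1,2)]) (use r c in auto)
    moreover have "0 \<le> Re (tr2 J W N)"
      by (rule insert.IH[OF psd_subset[OF fJ _ insert.prems(1)] PN]) auto
    ultimately show ?thesis by simp
  next
    case False
    then have rp: "Re (W m m) > 0" using d by simp
    have wmm: "W m m = complex_of_real (Re (W m m))" using d by (simp add: complex_eq_iff)
    define W' where "W' = (\<lambda>k i. W k i - W k m * W m i / W m m)"
    have PW': "psd ?J W'" unfolding W'_def by (rule psd_schur[OF insert.prems(1) fJ mJ wmm rp])
    have nz: "W m m \<noteq> 0" using rp by auto
    have W'r: "W' m i = 0" for i using nz unfolding W'_def by simp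
    have W'c: "W' k m = 0" for k using nz unfolding W'_def by simp
    have split: "tr2 ?J W N = tr2 ?J W' N + (\<Sum>k\<in>?J. \<Sum>i\<in>?J. W k m * W m i * N i k) / W m m"
    proof -
      have e: "\<And>k i. W k i * N i k = W' k i * N i k + W k m * W m i * N i k / W m m"
        unfolding W'_def by (simp add: algebra_simps)
      have "tr2 ?J W N = (\<Sum>k\<in>?J. \<Sum>i\<in>?J. W' k i * N i k + W k m * W m i * N i k / W m m)"
        unfolding tr2_def by (intro sum.cong refl e)
      also have "\<dots> = tr2 ?J W' N + (\<Sum>k\<in>?J. \<Sum>i\<in>?J. W k m * W m i * N i k / W m m)"
        unfolding tr2_def by (simp only: sum.distrib)
      also have "(\<Sum>k\<in>?J. \<Sum>i\<in>?J. W k m * W m i * N i k / W m m) = (\<Sum>k\<in>?J. \<Sum>i\<in>?J. W k m * W m i * N i k) / W m m"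
        by (simp only: sum_divide_distrib)
      finally show ?thesis .
    qed
    have "(\<Sum>k\<in>?J. \<Sum>i\<in>?J. W k m * W m i * N i k) = bf ?J N (\<lambda>j. W j m) (\<lambda>j. W j m)"
    proof -
      have "bf ?J N (\<lambda>j. W j m) (\<lambda>j. W j m) = (\<Sum>i\<in>?J. \<Sum>k\<in>?J. W m i * N i k * W k m)"
        unfolding bf_def by (intro sum.cong refl) (simp add: psd_herm[OF insert.prems(1) fJ mJ])
      also have "\<dots> = (\<Sum>k\<in>?J. \<Sum>i\<in>?J. W k m * W m i * N i k)"
        by (subst sum.swap) (simp add: algebra_simps)
      finally show ?thesis by simp
    qed
    then have s2: "0 \<le> Re ((\<Sum>k\<in>?J. \<Sum>i\<in>?J. W k m * W m i * N i k) / W m m)"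
      using insert.prems(2) rp unfolding psd_def by (subst wmm) (simp add: Re_divide_of_real)
    have "tr2 ?J W' N = tr2 J W' N" by (rule tr2_drop[OF insert(1,2)]) (use W'r W'c in auto)
    moreover have "0 \<le> Re (tr2 J W' N)"
      by (rule insert.IH[OF psd_subset[OF fJ _ PW'] PN]) auto
    ultimately show ?thesis unfolding split using s2 by simp
  qed
qed

lemma vinner_diff1:
  assumes "x \<in> l2 I" "y \<in> l2 I" "z \<in> l2 I"
  shows "vinner (\<lambda>n. x n - y n) z = vinner x z - vinner y z"
  using vinner_lin1[OF assms(2,1,3), of "-1"] by simp

lemma vinner_diff2:
  assumes "x \<in> l2 I" "y \<in> l2 I" "z \<in> l2 I"
  shows "vinner x (\<lambda>n. y n - z n) = vinner x y - vinner x z"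
  using vinner_lin2[OF assms(1,3,2), of "-1"] by simp

lemma quad_fin:
  assumes W: "blin I W cW" and J: "finite J" "J \<subseteq> I"
  shows "vinner (\<lambda>k. \<Sum>i\<in>J. d i * basis_vec i k) (W (\<lambda>k. \<Sum>i\<in>J. d i * basis_vec i k))
       = bf J (\<lambda>k i. W (basis_vec i) k) d d"
proof -
  let ?v = "\<lambda>k. \<Sum>i\<in>J. d i * basis_vec i k"
  have bl: "\<And>k. k \<in> J \<Longrightarrow> basis_vec k \<in> l2 I" using J by (auto intro: basis_l2)
  have Wv: "W ?v = (\<lambda>k. \<Sum>i\<in>J. d i * W (basis_vec i) k)"
    using blin_sum[OF W J(1), where v="basis_vec" and a=d] bl by blast
  have vk: "?v k = (if k \<in> J then d k else 0)" for k
    unfolding basis_vec_def using J by (simp add: if_distrib[of "\<lambda>t. _ * t"] cong: if_cong)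
  have "vinner ?v (W ?v) = (\<Sum>k\<in>J. cnj (?v k) * W ?v k)"
    by (rule vinner_fin[OF J(1)]) (simp add: vk)
  also have "\<dots> = (\<Sum>k\<in>J. cnj (d k) * (\<Sum>i\<in>J. d i * W (basis_vec i) k))"
  proof (rule sum.cong[OF refl])
    fix k assume k: "k \<in> J"
    show "cnj (?v k) * W ?v k = cnj (d k) * (\<Sum>i\<in>J. d i * W (basis_vec i) k)"
      unfolding Wv using vk[of k] k by simp
  qed
  also have "\<dots> = bf J (\<lambda>k i. W (basis_vec i) k) d d"
    unfolding bf_def by (simp add: sum_distrib_left mult_ac)
  finally show ?thesis .
qed

lemma fin_vec:
  assumes J: "finite J" "J \<subseteq> I"
  shows "(\<lambda>k. \<Sum>i\<in>J. d i * basis_vec i k) \<in> l2 I"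
    and "\<And>k. (\<lambda>k. \<Sum>i\<in>J. d i * basis_vec i k) k = (if k \<in> J then d k else 0)"
proof -
  show vk: "\<And>k. (\<lambda>k. \<Sum>i\<in>J. d i * basis_vec i k) k = (if k \<in> J then d k else 0)"
    unfolding basis_vec_def using J by (simp add: if_distrib[of "\<lambda>t. _ * t"] cong: if_cong)
  show "(\<lambda>k. \<Sum>i\<in>J. d i * basis_vec i k) \<in> l2 I"
    by (rule l2_finite_support[OF J]) (simp add: vk)
qed

lemma psd_W:
  assumes Wp: "positive_op I W" and J: "finite J" "J \<subseteq> I"
  shows "psd J (\<lambda>k i. W (basis_vec i) k)"
  unfolding psd_def
proof
  fix d :: "nat \<Rightarrow> complex"
  obtain cW where W: "blin I W cW" using bop_blin Wp by (auto simp: positive_op_def)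
  have v: "(\<lambda>k. \<Sum>i\<in>J. d i * basis_vec i k) \<in> l2 I" by (rule fin_vec[OF J])
  show "Im (bf J (\<lambda>k i. W (basis_vec i) k) d d) = 0 \<and> 0 \<le> Re (bf J (\<lambda>k i. W (basis_vec i) k) d d)"
    using Wp v unfolding positive_op_def quad_fin[OF W J, symmetric] by blast
qed

lemma quad_cont:
  assumes W: "blin I W cW" and x: "x \<in> l2 I"
  shows "(\<lambda>K. vinner (trunc K x) (W (trunc K x))) \<longlonglongrightarrow> vinner x (W x)"
proof -
  let ?y = "\<lambda>K. trunc K x"
  have y: "?y K \<in> l2 I" for K by (rule trunc_l2[OF x])
  have bnd: "cmod (vinner (?y K) (W (?y K)) - vinner x (W x)) \<le> 2 * cW * vnorm x * vnorm (\<lambda>n. x n - ?y K n)" for K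
  proof -
    have d: "(\<lambda>n. x n - ?y K n) \<in> l2 I" by (rule l2_diff[OF x y])
    have Wx: "W x \<in> l2 I" and Wy: "W (?y K) \<in> l2 I" using blin_l2[OF W] x y by auto
    have eq: "vinner x (W x) - vinner (?y K) (W (?y K)) = vinner (\<lambda>n. x n - ?y K n) (W x) + vinner (?y K) (\<lambda>n. W x n - W (?y K) n)"
      unfolding vinner_diff1[OF x y Wx] vinner_diff2[OF y Wx Wy] by simp
    have "cmod (vinner (\<lambda>n. x n - ?y K n) (W x)) \<le> vnorm (\<lambda>n. x n - ?y K n) * vnorm (W x)"
      by (rule vinner_CS[OF d Wx])
    also have "\<dots> \<le> vnorm (\<lambda>n. x n - ?y K n) * (cW * vnorm x)"
      by (rule mult_left_mono[OF blin_bound[OF W x] vnorm_nonneg[OF d]])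
    finally have a1: "cmod (vinner (\<lambda>n. x n - ?y K n) (W x)) \<le> cW * vnorm x * vnorm (\<lambda>n. x n - ?y K n)"
      by (simp add: mult_ac)
    have "cmod (vinner (?y K) (\<lambda>n. W x n - W (?y K) n)) \<le> vnorm (?y K) * vnorm (\<lambda>n. W x n - W (?y K) n)"
      by (rule vinner_CS[OF y l2_diff[OF Wx Wy]])
    also have "\<dots> \<le> vnorm x * (cW * vnorm (\<lambda>n. x n - ?y K n))"
      by (rule mult_mono[OF trunc_vnorm_le[OF x] blin_cont[OF W x y]])
         (auto intro: vnorm_nonneg[OF x] vnorm_nonneg[OF l2_diff[OF Wx Wy]])
    finally have a2: "cmod (vinner (?y K) (\<lambda>n. W x n - W (?y K) n)) \<le> cW * vnorm x * vnorm (\<lambda>n. x n - ?y K n)"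
      by (simp add: mult_ac)
    have "cmod (vinner (?y K) (W (?y K)) - vinner x (W x)) = cmod (vinner x (W x) - vinner (?y K) (W (?y K)))"
      by (rule norm_minus_commute)
    also have "\<dots> \<le> cmod (vinner (\<lambda>n. x n - ?y K n) (W x)) + cmod (vinner (?y K) (\<lambda>n. W x n - W (?y K) n))"
      unfolding eq by (rule norm_triangle_ineq)
    finally show ?thesis using a1 a2 by simp
  qed
  have "(\<lambda>K. 2 * cW * vnorm x * vnorm (\<lambda>n. x n - ?y K n)) \<longlonglongrightarrow> 2 * cW * vnorm x * 0"
    by (intro tendsto_mult tendsto_const trunc_conv[OF x])
  then have g0: "(\<lambda>K. 2 * cW * vnorm x * vnorm (\<lambda>n. x n - ?y K n)) \<longlonglongrightarrow> 0" by simp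
  have ev: "\<forall>\<^sub>F K in sequentially. norm (vinner (?y K) (W (?y K)) - vinner x (W x)) \<le> 2 * cW * vnorm x * vnorm (\<lambda>n. x n - ?y K n)"
    by (rule always_eventually) (use bnd in blast)
  have "(\<lambda>K. vinner (?y K) (W (?y K)) - vinner x (W x)) \<longlonglongrightarrow> 0"
    by (rule Lim_null_comparison[OF ev g0])
  then show ?thesis by (simp add: LIM_zero_iff)
qed

lemma pos_blin: "positive_op I W \<Longrightarrow> blin I W (opnorm I W)"
  by (rule bop_blin) (simp add: positive_op_def)

lemma quad_expand:
  assumes W: "blin I W cW" and x: "x \<in> l2 I" and y: "y \<in> l2 I"
  shows "vinner (\<lambda>n. a * y n + x n) (W (\<lambda>n. a * y n + x n))
    = cnj a * (a * vinner y (W y) + vinner y (W x)) + (a * vinner x (W y) + vinner x (W x))"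
proof -
  have Wx: "W x \<in> l2 I" and Wy: "W y \<in> l2 I" using blin_l2[OF W] x y by auto
  have z: "(\<lambda>n. a * y n + x n) \<in> l2 I" by (rule l2_lincomb[OF y x])
  have Wz: "W (\<lambda>n. a * y n + x n) = (\<lambda>n. a * W y n + W x n)" by (rule blin_lin[OF W y x])
  have "vinner (\<lambda>n. a * y n + x n) (W (\<lambda>n. a * y n + x n))
      = cnj a * vinner y (\<lambda>n. a * W y n + W x n) + vinner x (\<lambda>n. a * W y n + W x n)"
    unfolding Wz by (rule vinner_lin1[OF y x l2_lincomb[OF Wy Wx]])
  also have "\<dots> = cnj a * (a * vinner y (W y) + vinner y (W x)) + (a * vinner x (W y) + vinner x (W x))"
    unfolding vinner_lin2[OF y Wy Wx] vinner_lin2[OF x Wy Wx] ..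
  finally show ?thesis .
qed

lemma form_CS:
  assumes Wp: "positive_op I W" and x: "x \<in> l2 I" and y: "y \<in> l2 I"
  shows "(cmod (vinner x (W y)))\<^sup>2 \<le> Re (vinner x (W x)) * Re (vinner y (W y))"
proof -
  have W: "blin I W (opnorm I W)" by (rule pos_blin[OF Wp])
  have pos: "\<And>z. z \<in> l2 I \<Longrightarrow> Im (vinner z (W z)) = 0 \<and> Re (vinner z (W z)) \<ge> 0"
    using Wp by (auto simp: positive_op_def)
  define p where "p = vinner x (W y)"
  define q where "q = vinner y (W x)"
  define A where "A = vinner x (W x)"
  define B where "B = vinner y (W y)"
  have QA: "Im A = 0" "Re A \<ge> 0" using pos[OF x] by (auto simp: A_def)
  have QB: "Im B = 0" "Re B \<ge> 0" using pos[OF y] by (auto simp: B_def)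
  have Q: "Im (cnj a * (a * B + q) + (a * p + A)) = 0 \<and> Re (cnj a * (a * B + q) + (a * p + A)) \<ge> 0" for a
    using pos[OF l2_lincomb[OF y x, of a]] quad_expand[OF W x y, of a] by (simp add: A_def B_def p_def q_def)
  have h1: "Im (q + p) = 0" using Q[of 1] QA QB by simp
  have h2: "Re p - Re q = 0" using Q[of \<i>] QA QB by (simp add: algebra_simps)
  have qp: "q = cnj p" using h1 h2 by (simp add: complex_eq_iff)
  have key: "0 \<le> t\<^sup>2 * (cmod p)\<^sup>2 * Re B - 2 * t * (cmod p)\<^sup>2 + Re A" for t :: real
  proof -
    have "0 \<le> Re (cnj (- (of_real t * cnj p)) * (- (of_real t * cnj p) * B + q) + (- (of_real t * cnj p) * p + A))"
      using Q by blast
    also have "\<dots> = t\<^sup>2 * (cmod p)\<^sup>2 * Re B - 2 * t * (cmod p)\<^sup>2 + Re A"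
      unfolding qp using QB cmod_power2[of p] by (simp add: algebra_simps power2_eq_square)
    finally show ?thesis .
  qed
  show ?thesis
  proof (cases "p = 0")
    case True then show ?thesis using QA QB by (simp add: p_def A_def B_def)
  next
    case False
    then have pp: "(cmod p)\<^sup>2 > 0" by simp
    show ?thesis
    proof (cases "Re B = 0")
      case True
      define t where "t = (Re A + 1) / (2 * (cmod p)\<^sup>2)"
      have k: "0 \<le> t\<^sup>2 * (cmod p)\<^sup>2 * Re B - 2 * t * (cmod p)\<^sup>2 + Re A" by (rule key)
      have "2 * t * (cmod p)\<^sup>2 = Re A + 1" using pp unfolding t_def by (simp add: field_simps)
      then show ?thesis using k True by simp
    next
      case False
      then have Bp: "Re B > 0" using QB by simp
      have "0 \<le> (1 / Re B)\<^sup>2 * (cmod p)\<^sup>2 * Re B - 2 * (1 / Re B) * (cmod p)\<^sup>2 + Re A"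
        by (rule key)
      also have "\<dots> = Re A - (cmod p)\<^sup>2 / Re B" using Bp by (simp add: field_simps power2_eq_square)
      finally have "(cmod p)\<^sup>2 / Re B \<le> Re A" by simp
      then have "(cmod p)\<^sup>2 \<le> Re A * Re B" using Bp by (simp add: divide_le_eq)
      then show ?thesis by (simp add: p_def A_def B_def)
    qed
  qed
qed

lemma diag_nonneg:
  assumes Wp: "positive_op I W" and k: "k \<in> I"
  shows "Re (W (basis_vec k) k) \<ge> 0" "Im (W (basis_vec k) k) = 0"
  using Wp basis_l2[OF k] unfolding positive_op_def by (auto simp: vinner_basis)

lemma psd_N:
  assumes J: "finite J" "J \<subseteq> I" and F: "finite F" "F \<subseteq> I"
    and fr: "\<And>d. d \<in> l2 I \<Longrightarrow> (\<Sum>n\<in>F. (cmod (vinner d (u n)))\<^sup>2) \<le> c\<^sup>2 * (vnorm d)\<^sup>2"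
  shows "psd J (\<lambda>i k. (if i = k then complex_of_real (c\<^sup>2) else 0) - (\<Sum>n\<in>F. u n i * cnj (u n k)))"
  unfolding psd_def
proof
  fix d :: "nat \<Rightarrow> complex"
  let ?N = "\<lambda>i k. (if i = k then complex_of_real (c\<^sup>2) else 0) - (\<Sum>n\<in>F. u n i * cnj (u n k))"
  define s where "s n = (\<Sum>i\<in>J. cnj (d i) * u n i)" for n
  let ?dv = "\<lambda>k. \<Sum>i\<in>J. d i * basis_vec i k"
  have dv: "?dv \<in> l2 I" by (rule fin_vec[OF J])
  have dvk: "?dv k = (if k \<in> J then d k else 0)" for k by (rule fin_vec[OF J])
  have vs: "vinner ?dv (u n) = s n" for n
    unfolding s_def by (subst vinner_fin[OF J(1)]) (auto simp: dvk intro!: sum.cong)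
  have nd: "(vnorm ?dv)\<^sup>2 = (\<Sum>i\<in>J. (cmod (d i))\<^sup>2)"
    by (subst vnorm_fin[OF J(1)]) (auto simp: dvk intro!: sum.cong)
  have frm: "(\<Sum>n\<in>F. (cmod (s n))\<^sup>2) \<le> c\<^sup>2 * (\<Sum>i\<in>J. (cmod (d i))\<^sup>2)"
    using fr[OF dv] unfolding vs nd .
  have p1: "(\<Sum>i\<in>J. \<Sum>k\<in>J. cnj (d i) * (if i = k then complex_of_real (c\<^sup>2) else 0) * d k)
      = complex_of_real (c\<^sup>2 * (\<Sum>i\<in>J. (cmod (d i))\<^sup>2))"
  proof -
    have "\<And>i. i \<in> J \<Longrightarrow> (\<Sum>k\<in>J. cnj (d i) * (if i = k then complex_of_real (c\<^sup>2) else 0) * d k)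
        = complex_of_real (c\<^sup>2 * (cmod (d i))\<^sup>2)"
    proof -
      fix i assume i: "i \<in> J"
      have "(\<Sum>k\<in>J. cnj (d i) * (if i = k then complex_of_real (c\<^sup>2) else 0) * d k)
          = (\<Sum>k\<in>J. if i = k then cnj (d i) * complex_of_real (c\<^sup>2) * d i else 0)"
        by (rule sum.cong) auto
      also have "\<dots> = cnj (d i) * complex_of_real (c\<^sup>2) * d i" using i J by simp
      also have "\<dots> = complex_of_real (c\<^sup>2) * (cnj (d i) * d i)" by (simp only: mult_ac)
      also have "cnj (d i) * d i = complex_of_real ((cmod (d i))\<^sup>2)" by (metis complex_norm_square mult.commute)
      also have "complex_of_real (c\<^sup>2) * complex_of_real ((cmod (d i))\<^sup>2) = complex_of_real (c\<^sup>2 * (cmod (d i))\<^sup>2)"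
        by (simp only: of_real_mult)
      finally show "(\<Sum>k\<in>J. cnj (d i) * (if i = k then complex_of_real (c\<^sup>2) else 0) * d k)
        = complex_of_real (c\<^sup>2 * (cmod (d i))\<^sup>2)" .
    qed
    then have "(\<Sum>i\<in>J. \<Sum>k\<in>J. cnj (d i) * (if i = k then complex_of_real (c\<^sup>2) else 0) * d k)
        = (\<Sum>i\<in>J. complex_of_real (c\<^sup>2 * (cmod (d i))\<^sup>2))" by (rule sum.cong[OF refl])
    also have "\<dots> = complex_of_real (c\<^sup>2 * (\<Sum>i\<in>J. (cmod (d i))\<^sup>2))"
      by (simp add: sum_distrib_left)
    finally show ?thesis .
  qed
  have p2: "(\<Sum>i\<in>J. \<Sum>k\<in>J. cnj (d i) * (\<Sum>n\<in>F. u n i * cnj (u n k)) * d k)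
      = complex_of_real (\<Sum>n\<in>F. (cmod (s n))\<^sup>2)"
  proof -
    have "(\<Sum>n\<in>F. s n * cnj (s n)) = (\<Sum>n\<in>F. \<Sum>i\<in>J. \<Sum>k\<in>J. cnj (d i) * u n i * (d k * cnj (u n k)))"
      unfolding s_def by (simp add: sum_product)
    also have "\<dots> = (\<Sum>i\<in>J. \<Sum>n\<in>F. \<Sum>k\<in>J. cnj (d i) * u n i * (d k * cnj (u n k)))"
      by (rule sum.swap)
    also have "\<dots> = (\<Sum>i\<in>J. \<Sum>k\<in>J. \<Sum>n\<in>F. cnj (d i) * u n i * (d k * cnj (u n k)))"
      by (rule sum.cong[OF refl], rule sum.swap)
    also have "\<dots> = (\<Sum>i\<in>J. \<Sum>k\<in>J. cnj (d i) * (\<Sum>n\<in>F. u n i * cnj (u n k)) * d k)"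
      by (simp add: sum_distrib_left sum_distrib_right mult_ac)
    finally have e: "(\<Sum>n\<in>F. s n * cnj (s n)) = (\<Sum>i\<in>J. \<Sum>k\<in>J. cnj (d i) * (\<Sum>n\<in>F. u n i * cnj (u n k)) * d k)" .
    have "\<And>n. s n * cnj (s n) = complex_of_real ((cmod (s n))\<^sup>2)" by (metis complex_norm_square)
    then have "(\<Sum>n\<in>F. s n * cnj (s n)) = complex_of_real (\<Sum>n\<in>F. (cmod (s n))\<^sup>2)" by simp
    then show ?thesis using e by simp
  qed
  have "bf J ?N d d = (\<Sum>i\<in>J. \<Sum>k\<in>J. cnj (d i) * (if i = k then complex_of_real (c\<^sup>2) else 0) * d k)
      - (\<Sum>i\<in>J. \<Sum>k\<in>J. cnj (d i) * (\<Sum>n\<in>F. u n i * cnj (u n k)) * d k)"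
    unfolding bf_def by (simp add: right_diff_distrib left_diff_distrib sum_subtractf)
  also have "\<dots> = complex_of_real (c\<^sup>2 * (\<Sum>i\<in>J. (cmod (d i))\<^sup>2) - (\<Sum>n\<in>F. (cmod (s n))\<^sup>2))"
    unfolding p1 p2 by simp
  finally show "Im (bf J ?N d d) = 0 \<and> 0 \<le> Re (bf J ?N d d)" using frm by simp
qed

abbreviation trW :: "nat set \<Rightarrow> op \<Rightarrow> real" where
  "trW I W \<equiv> (\<Sum>n. if n \<in> I then Re (W (basis_vec n) n) else 0)"

lemma trW_nonneg:
  assumes Wp: "positive_op I W" and sW: "summable (\<lambda>n. if n \<in> I then Re (W (basis_vec n) n) else 0)"
  shows "trW I W \<ge> 0"
  by (rule suminf_nonneg[OF sW]) (use diag_nonneg[OF Wp] in auto)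

lemma trace_bound:
  assumes Wp: "positive_op I W"
    and sW: "summable (\<lambda>n. if n \<in> I then Re (W (basis_vec n) n) else 0)"
    and u: "\<And>n. n \<in> I \<Longrightarrow> u n \<in> l2 I"
    and fr: "\<And>d F. d \<in> l2 I \<Longrightarrow> finite F \<Longrightarrow> F \<subseteq> I \<Longrightarrow> (\<Sum>n\<in>F. (cmod (vinner d (u n)))\<^sup>2) \<le> c\<^sup>2 * (vnorm d)\<^sup>2"
    and F: "finite F" "F \<subseteq> I"
  shows "(\<Sum>n\<in>F. Re (vinner (u n) (W (u n)))) \<le> c\<^sup>2 * trW I W"
proof -
  have W: "blin I W (opnorm I W)" by (rule pos_blin[OF Wp])
  have step: "(\<Sum>n\<in>F. Re (vinner (trunc K (u n)) (W (trunc K (u n))))) \<le> c\<^sup>2 * trW I W" for K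
  proof -
    define J where "J = I \<inter> {..<K}"
    have J: "finite J" "J \<subseteq> I" by (auto simp: J_def)
    let ?Wm = "\<lambda>k i. W (basis_vec i) k"
    define N where "N = (\<lambda>i k. (if i = k then complex_of_real (c\<^sup>2) else 0) - (\<Sum>n\<in>F. u n i * cnj (u n k)))"
    have tq: "vinner (trunc K (u n)) (W (trunc K (u n))) = bf J ?Wm (u n) (u n)" if "n \<in> F" for n
    proof -
      have un: "u n \<in> l2 I" using u F that by auto
      have "trunc K (u n) = (\<lambda>k. \<Sum>i\<in>J. u n i * basis_vec i k)" unfolding J_def by (rule trunc_sum[OF un])
      then show ?thesis using quad_fin[OF W J, of "u n"] by simp
    qed
    have sumq: "(\<Sum>n\<in>F. bf J ?Wm (u n) (u n)) = of_real (c\<^sup>2) * (\<Sum>k\<in>J. ?Wm k k) - tr2 J ?Wm N"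
    proof -
      have "(\<Sum>n\<in>F. bf J ?Wm (u n) (u n)) = (\<Sum>k\<in>J. \<Sum>n\<in>F. \<Sum>i\<in>J. cnj (u n k) * ?Wm k i * u n i)"
        unfolding bf_def by (rule sum.swap)
      also have "\<dots> = (\<Sum>k\<in>J. \<Sum>i\<in>J. \<Sum>n\<in>F. cnj (u n k) * ?Wm k i * u n i)"
        by (rule sum.cong[OF refl], rule sum.swap)
      also have "\<dots> = (\<Sum>k\<in>J. \<Sum>i\<in>J. ?Wm k i * (\<Sum>n\<in>F. u n i * cnj (u n k)))"
        by (simp add: sum_distrib_left mult_ac)
      finally have e1: "(\<Sum>n\<in>F. bf J ?Wm (u n) (u n)) = (\<Sum>k\<in>J. \<Sum>i\<in>J. ?Wm k i * (\<Sum>n\<in>F. u n i * cnj (u n k)))" .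
      have e2: "tr2 J ?Wm N = (\<Sum>k\<in>J. \<Sum>i\<in>J. ?Wm k i * (if i = k then complex_of_real (c\<^sup>2) else 0))
          - (\<Sum>k\<in>J. \<Sum>i\<in>J. ?Wm k i * (\<Sum>n\<in>F. u n i * cnj (u n k)))"
        unfolding tr2_def N_def by (simp add: right_diff_distrib sum_subtractf)
      have e3: "(\<Sum>k\<in>J. \<Sum>i\<in>J. ?Wm k i * (if i = k then complex_of_real (c\<^sup>2) else 0)) = of_real (c\<^sup>2) * (\<Sum>k\<in>J. ?Wm k k)"
      proof -
        have "(\<Sum>k\<in>J. \<Sum>i\<in>J. ?Wm k i * (if i = k then complex_of_real (c\<^sup>2) else 0)) = (\<Sum>k\<in>J. of_real (c\<^sup>2) * ?Wm k k)"
        proof (rule sum.cong[OF refl])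
          fix k assume k: "k \<in> J"
          have "(\<Sum>i\<in>J. ?Wm k i * (if i = k then complex_of_real (c\<^sup>2) else 0)) = (\<Sum>i\<in>J. if i = k then ?Wm k k * complex_of_real (c\<^sup>2) else 0)"
            by (rule sum.cong) auto
          also have "\<dots> = ?Wm k k * complex_of_real (c\<^sup>2)" using k J by simp
          finally show "(\<Sum>i\<in>J. ?Wm k i * (if i = k then complex_of_real (c\<^sup>2) else 0)) = of_real (c\<^sup>2) * ?Wm k k"
            by (simp add: mult.commute)
        qed
        then show ?thesis by (simp add: sum_distrib_left)
      qed
      show ?thesis using e1 e2 e3 by simp
    qed
    have frF: "\<And>d. d \<in> l2 I \<Longrightarrow> (\<Sum>n\<in>F. (cmod (vinner d (u n)))\<^sup>2) \<le> c\<^sup>2 * (vnorm d)\<^sup>2"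
      using fr F by blast
    have nn: "0 \<le> Re (tr2 J ?Wm N)"
      unfolding N_def by (rule fm_psd[OF J(1) psd_W[OF Wp J] psd_N[OF J F frF]])
    have dsum: "Re (\<Sum>k\<in>J. ?Wm k k) \<le> trW I W"
    proof -
      have "Re (\<Sum>k\<in>J. ?Wm k k) = (\<Sum>k\<in>J. if k \<in> I then Re (W (basis_vec k) k) else 0)"
        using J by (simp add: Re_sum subset_iff)
      also have "\<dots> \<le> trW I W"
        by (rule sum_le_suminf[OF sW J(1)]) (use diag_nonneg[OF Wp] in auto)
      finally show ?thesis .
    qed
    have "(\<Sum>n\<in>F. Re (vinner (trunc K (u n)) (W (trunc K (u n))))) = Re (\<Sum>n\<in>F. bf J ?Wm (u n) (u n))"
      using tq by (simp add: Re_sum)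
    also have "\<dots> = c\<^sup>2 * Re (\<Sum>k\<in>J. ?Wm k k) - Re (tr2 J ?Wm N)"
      unfolding sumq by simp
    also have "\<dots> \<le> c\<^sup>2 * trW I W"
      using nn mult_left_mono[OF dsum, of "c\<^sup>2"] by simp
    finally show ?thesis .
  qed
  have lim: "(\<lambda>K. \<Sum>n\<in>F. Re (vinner (trunc K (u n)) (W (trunc K (u n))))) \<longlonglongrightarrow> (\<Sum>n\<in>F. Re (vinner (u n) (W (u n))))"
  proof (rule tendsto_sum)
    fix n assume "n \<in> F"
    then have un: "u n \<in> l2 I" using u F by auto
    show "(\<lambda>K. Re (vinner (trunc K (u n)) (W (trunc K (u n))))) \<longlonglongrightarrow> Re (vinner (u n) (W (u n)))"
      by (rule tendsto_Re[OF quad_cont[OF W un]])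
  qed
  show ?thesis by (rule LIMSEQ_le_const2[OF lim]) (use step in blast)
qed

lemma trace_abs_bound:
  assumes Wp: "positive_op I W"
    and sW: "summable (\<lambda>n. if n \<in> I then Re (W (basis_vec n) n) else 0)"
    and u: "\<And>n. n \<in> I \<Longrightarrow> u n \<in> l2 I"
    and fr: "\<And>d F. d \<in> l2 I \<Longrightarrow> finite F \<Longrightarrow> F \<subseteq> I \<Longrightarrow> (\<Sum>n\<in>F. (cmod (vinner d (u n)))\<^sup>2) \<le> c\<^sup>2 * (vnorm d)\<^sup>2"
    and u': "\<And>n. n \<in> I \<Longrightarrow> u' n \<in> l2 I"
    and fr': "\<And>d F. d \<in> l2 I \<Longrightarrow> finite F \<Longrightarrow> F \<subseteq> I \<Longrightarrow> (\<Sum>n\<in>F. (cmod (vinner d (u' n)))\<^sup>2) \<le> c'\<^sup>2 * (vnorm d)\<^sup>2"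
    and c: "c \<ge> 0" "c' \<ge> 0"
    and F: "finite F" "F \<subseteq> I"
  shows "(\<Sum>n\<in>F. cmod (vinner (u n) (W (u' n)))) \<le> c * c' * trW I W"
proof -
  define A where "A n = Re (vinner (u n) (W (u n)))" for n
  define B where "B n = Re (vinner (u' n) (W (u' n)))" for n
  have T0: "trW I W \<ge> 0" by (rule trW_nonneg[OF Wp sW])
  have A0: "A n \<ge> 0" if "n \<in> F" for n
    using Wp u[of n] that F unfolding A_def positive_op_def by auto
  have B0: "B n \<ge> 0" if "n \<in> F" for n
    using Wp u'[of n] that F unfolding B_def positive_op_def by auto
  have h: "cmod (vinner (u n) (W (u' n))) \<le> sqrt (A n) * sqrt (B n)" if "n \<in> F" for n
  proof -
    have "(cmod (vinner (u n) (W (u' n))))\<^sup>2 \<le> A n * B n"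
      unfolding A_def B_def by (rule form_CS[OF Wp]) (use u u' that F in auto)
    then have "cmod (vinner (u n) (W (u' n))) \<le> sqrt (A n * B n)" by (rule real_le_rsqrt)
    then show ?thesis by (simp add: real_sqrt_mult)
  qed
  have "(\<Sum>n\<in>F. cmod (vinner (u n) (W (u' n)))) \<le> (\<Sum>n\<in>F. sqrt (A n) * sqrt (B n))"
    by (rule sum_mono) (rule h)
  also have "\<dots> \<le> c * c' * trW I W"
  proof -
    have "(\<Sum>n\<in>F. sqrt (A n) * sqrt (B n))\<^sup>2 \<le> (\<Sum>n\<in>F. (sqrt (A n))\<^sup>2) * (\<Sum>n\<in>F. (sqrt (B n))\<^sup>2)"
      by (rule Cauchy_Schwarz_ineq_sum)
    also have "\<dots> = (\<Sum>n\<in>F. A n) * (\<Sum>n\<in>F. B n)"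
      using A0 B0 by (simp cong: sum.cong)
    also have "\<dots> \<le> (c\<^sup>2 * trW I W) * (c'\<^sup>2 * trW I W)"
    proof (rule mult_mono)
      show "(\<Sum>n\<in>F. A n) \<le> c\<^sup>2 * trW I W" unfolding A_def by (rule trace_bound[OF Wp sW u fr F])
      show "(\<Sum>n\<in>F. B n) \<le> c'\<^sup>2 * trW I W" unfolding B_def by (rule trace_bound[OF Wp sW u' fr' F])
      show "0 \<le> c\<^sup>2 * trW I W" using T0 by simp
      show "0 \<le> (\<Sum>n\<in>F. B n)" using B0 by (simp add: sum_nonneg)
    qed
    also have "\<dots> = (c * c' * trW I W)\<^sup>2" by (simp add: power2_eq_square mult_ac)
    finally have sq: "(\<Sum>n\<in>F. sqrt (A n) * sqrt (B n))\<^sup>2 \<le> (c * c' * trW I W)\<^sup>2" .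
    show ?thesis by (rule power2_le_imp_le[OF sq]) (use c T0 in simp)
  qed
  finally show ?thesis .
qed

lemma trace_summable:
  assumes Wp: "positive_op I W"
    and sW: "summable (\<lambda>n. if n \<in> I then Re (W (basis_vec n) n) else 0)"
    and u: "\<And>n. n \<in> I \<Longrightarrow> u n \<in> l2 I"
    and fr: "\<And>d F. d \<in> l2 I \<Longrightarrow> finite F \<Longrightarrow> F \<subseteq> I \<Longrightarrow> (\<Sum>n\<in>F. (cmod (vinner d (u n)))\<^sup>2) \<le> c\<^sup>2 * (vnorm d)\<^sup>2"
    and u': "\<And>n. n \<in> I \<Longrightarrow> u' n \<in> l2 I"
    and fr': "\<And>d F. d \<in> l2 I \<Longrightarrow> finite F \<Longrightarrow> F \<subseteq> I \<Longrightarrow> (\<Sum>n\<in>F. (cmod (vinner d (u' n)))\<^sup>2) \<le> c'\<^sup>2 * (vnorm d)\<^sup>2"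
    and c: "c \<ge> 0" "c' \<ge> 0"
  shows "summable (\<lambda>n. if n \<in> I then vinner (u n) (W (u' n)) else 0)"
    and "cmod (\<Sum>n. if n \<in> I then vinner (u n) (W (u' n)) else 0) \<le> c * c' * trW I W"
proof -
  let ?f = "\<lambda>n. if n \<in> I then vinner (u n) (W (u' n)) else 0"
  have ps: "(\<Sum>n<N. norm (?f n)) \<le> c * c' * trW I W" for N
  proof -
    have "(\<Sum>n<N. norm (?f n)) = (\<Sum>n\<in>I \<inter> {..<N}. cmod (vinner (u n) (W (u' n))))"
      by (rule sum.mono_neutral_cong_right) auto
    also have "\<dots> \<le> c * c' * trW I W"
      by (rule trace_abs_bound[OF Wp sW u fr u' fr' c]) auto
    finally show ?thesis .
  qed
  have sn: "summable (\<lambda>n. norm (?f n))" by (rule summableI_nonneg_bounded[OF _ ps]) simp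
  show "summable ?f" by (rule summable_norm_cancel[OF sn])
  have "cmod (suminf ?f) \<le> (\<Sum>n. norm (?f n))" by (rule summable_norm[OF sn])
  also have "\<dots> \<le> c * c' * trW I W" by (rule suminf_le_const[OF sn ps])
  finally show "cmod (\<Sum>n. ?f n) \<le> c * c' * trW I W" .
qed

lemma blin_comp:
  assumes S: "blin I S a" and T: "blin I T b"
  shows "blin I (S \<circ> T) (a * b)"
  unfolding blin_def
proof (intro conjI ballI allI)
  show "0 \<le> a * b" using blin_nonneg[OF S] blin_nonneg[OF T] by simp
  fix x assume x: "x \<in> l2 I"
  show "(S \<circ> T) x \<in> l2 I" using blin_l2[OF S blin_l2[OF T x]] by simp
  show "vnorm ((S \<circ> T) x) \<le> a * b * vnorm x"
  proof -
    have "vnorm (S (T x)) \<le> a * vnorm (T x)" by (rule blin_bound[OF S blin_l2[OF T x]])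
    also have "\<dots> \<le> a * (b * vnorm x)" by (rule mult_left_mono[OF blin_bound[OF T x] blin_nonneg[OF S]])
    finally show ?thesis by (simp add: mult_ac)
  qed
  fix y c assume y: "y \<in> l2 I"
  show "(S \<circ> T) (\<lambda>n. c * x n + y n) = (\<lambda>n. c * (S \<circ> T) x n + (S \<circ> T) y n)"
    using blin_lin[OF T x y, of c] blin_lin[OF S blin_l2[OF T x] blin_l2[OF T y], of c] by simp
qed

lemma blin_opplus:
  assumes S: "blin I S a" and T: "blin I T b"
  shows "blin I (opplus I S T) (a + b)"
  unfolding blin_def
proof (intro conjI ballI allI)
  show "0 \<le> a + b" using blin_nonneg[OF S] blin_nonneg[OF T] by simp
  fix x assume x: "x \<in> l2 I"
  have e: "opplus I S T x = (\<lambda>n. S x n + T x n)" using x by (simp add: opplus_def)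
  show "opplus I S T x \<in> l2 I" unfolding e by (rule l2_add[OF blin_l2[OF S x] blin_l2[OF T x]])
  show "vnorm (opplus I S T x) \<le> (a + b) * vnorm x"
    unfolding e using vnorm_triangle[OF blin_l2[OF S x] blin_l2[OF T x]] blin_bound[OF S x] blin_bound[OF T x]
    by (simp add: distrib_right)
  fix y c assume y: "y \<in> l2 I"
  have e2: "opplus I S T (\<lambda>n. c * x n + y n) = (\<lambda>n. S (\<lambda>n. c * x n + y n) n + T (\<lambda>n. c * x n + y n) n)"
    using l2_lincomb[OF x y] by (simp add: opplus_def)
  have e3: "opplus I S T y = (\<lambda>n. S y n + T y n)" using y by (simp add: opplus_def)
  show "opplus I S T (\<lambda>n. c * x n + y n) = (\<lambda>n. c * opplus I S T x n + opplus I S T y n)"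
    unfolding e2 e e3 blin_lin[OF S x y] blin_lin[OF T x y] by (simp add: algebra_simps)
qed

lemma idop_l2: "x \<in> l2 I \<Longrightarrow> idop I x = x"
  by (simp add: idop_def)

lemma blin_Q:
  assumes P: "blin I P c"
  shows "blin I (opminus I (idop I) P) (1 + c)"
  unfolding blin_def
proof (intro conjI ballI allI)
  show "0 \<le> 1 + c" using blin_nonneg[OF P] by simp
  fix x assume x: "x \<in> l2 I"
  have e: "opminus I (idop I) P x = (\<lambda>n. x n - P x n)" using x by (simp add: opminus_def idop_def)
  show "opminus I (idop I) P x \<in> l2 I" unfolding e by (rule l2_diff[OF x blin_l2[OF P x]])
  show "vnorm (opminus I (idop I) P x) \<le> (1 + c) * vnorm x"
  proof -
    have m: "(\<lambda>n. - 1 * P x n) \<in> l2 I" by (rule l2_scale[OF blin_l2[OF P x]])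
    have "vnorm (\<lambda>n. x n - P x n) = vnorm (\<lambda>n. x n + (- 1 * P x n))" by simp
    also have "\<dots> \<le> vnorm x + vnorm (\<lambda>n. - 1 * P x n)" by (rule vnorm_triangle[OF x m])
    also have "vnorm (\<lambda>n. - 1 * P x n) = vnorm (P x)" using vnorm_scale[OF blin_l2[OF P x], of "-1"] by simp
    finally show ?thesis unfolding e using blin_bound[OF P x] by (simp add: distrib_right)
  qed
  fix y a assume y: "y \<in> l2 I"
  have e2: "opminus I (idop I) P (\<lambda>n. a * x n + y n) = (\<lambda>n. (a * x n + y n) - P (\<lambda>n. a * x n + y n) n)"
    using l2_lincomb[OF x y] by (simp add: opminus_def idop_def)
  have e3: "opminus I (idop I) P y = (\<lambda>n. y n - P y n)" using y by (simp add: opminus_def idop_def)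
  show "opminus I (idop I) P (\<lambda>n. a * x n + y n) = (\<lambda>n. a * opminus I (idop I) P x n + opminus I (idop I) P y n)"
    unfolding e2 e e3 blin_lin[OF P x y] by (simp add: algebra_simps)
qed

lemma basis_frame:
  assumes d: "d \<in> l2 I" and F: "finite F" "F \<subseteq> I"
  shows "(\<Sum>n\<in>F. (cmod (vinner d (basis_vec n)))\<^sup>2) \<le> 1\<^sup>2 * (vnorm d)\<^sup>2"
proof -
  have "vinner d (basis_vec n) = cnj (d n)" if "n \<in> F" for n
    using vinner_cnj[OF basis_l2 d, of n] F that by (auto simp: vinner_basis)
  then have "(\<Sum>n\<in>F. (cmod (vinner d (basis_vec n)))\<^sup>2) = (\<Sum>n\<in>F. (cmod (d n))\<^sup>2)" by simp
  also have "\<dots> \<le> (vnorm d)\<^sup>2" by (rule partial_le_vnorm[OF d F(1)])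
  finally show ?thesis by simp
qed

lemma omega_eq:
  "omega I W X = (\<Sum>n. if n \<in> I then vinner (basis_vec n) (W (X (basis_vec n))) else 0)"
  unfolding omega_def trace_def comp_def by simp

lemma omegaP_eq:
  assumes P: "blin I P cP" and W: "blin I W cW" and X: "blin I X cX"
  shows "omega I (W_P I P W) X = (\<Sum>n. if n \<in> I then
      vinner (row I P n) (W (P (X (basis_vec n)))) + vinner (row I (opminus I (idop I) P) n) (W (opminus I (idop I) P (X (basis_vec n)))) else 0)"
proof -
  let ?Q = "opminus I (idop I) P"
  have Q: "blin I ?Q (1 + cP)" by (rule blin_Q[OF P])
  have "vinner (basis_vec n) (W_P I P W (X (basis_vec n))) =
      vinner (row I P n) (W (P (X (basis_vec n)))) + vinner (row I ?Q n) (W (?Q (X (basis_vec n))))" if n: "n \<in> I" for n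
  proof -
    have z: "X (basis_vec n) \<in> l2 I" by (rule blin_l2[OF X basis_l2[OF n]])
    have "W_P I P W (X (basis_vec n)) = (\<lambda>k. P (W (P (X (basis_vec n)))) k + ?Q (W (?Q (X (basis_vec n)))) k)"
      using z by (simp add: W_P_def opplus_def)
    then have "vinner (basis_vec n) (W_P I P W (X (basis_vec n))) = P (W (P (X (basis_vec n)))) n + ?Q (W (?Q (X (basis_vec n)))) n"
      by (simp add: vinner_basis)
    also have "P (W (P (X (basis_vec n)))) n = vinner (row I P n) (W (P (X (basis_vec n))))"
      by (rule row_repr[OF P blin_l2[OF W blin_l2[OF P z]]])
    also have "?Q (W (?Q (X (basis_vec n)))) n = vinner (row I ?Q n) (W (?Q (X (basis_vec n))))"
      by (rule row_repr[OF Q blin_l2[OF W blin_l2[OF Q z]]])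
    finally show ?thesis .
  qed
  then show ?thesis unfolding omega_def trace_def comp_def by (intro arg_cong[where f=suminf] ext) auto
qed

lemma omegaP_term:
  assumes P: "blin I P cP" and W: "blin I W cW" and X: "blin I X cX" and n: "n \<in> I"
  shows "vinner (basis_vec n) (W_P I P W (X (basis_vec n))) =
      vinner (row I P n) (W (P (X (basis_vec n)))) + vinner (row I (opminus I (idop I) P) n) (W (opminus I (idop I) P (X (basis_vec n))))"
proof -
  let ?Q = "opminus I (idop I) P"
  have Q: "blin I ?Q (1 + cP)" by (rule blin_Q[OF P])
  have z: "X (basis_vec n) \<in> l2 I" by (rule blin_l2[OF X basis_l2[OF n]])
  have "W_P I P W (X (basis_vec n)) = (\<lambda>k. P (W (P (X (basis_vec n)))) k + ?Q (W (?Q (X (basis_vec n)))) k)"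
    using z by (simp add: W_P_def opplus_def)
  then have "vinner (basis_vec n) (W_P I P W (X (basis_vec n))) = P (W (P (X (basis_vec n)))) n + ?Q (W (?Q (X (basis_vec n)))) n"
    by (simp add: vinner_basis)
  also have "P (W (P (X (basis_vec n)))) n = vinner (row I P n) (W (P (X (basis_vec n))))"
    by (rule row_repr[OF P blin_l2[OF W blin_l2[OF P z]]])
  also have "?Q (W (?Q (X (basis_vec n)))) n = vinner (row I ?Q n) (W (?Q (X (basis_vec n))))"
    by (rule row_repr[OF Q blin_l2[OF W blin_l2[OF Q z]]])
  finally show ?thesis .
qed

lemma suminf_lin:
  fixes f g :: "nat \<Rightarrow> complex"
  assumes "summable f" "summable g"
  shows "(\<Sum>n. a * f n + g n) = a * suminf f + suminf g"
  using suminf_add[OF summable_mult[OF assms(1)] assms(2), of a] suminf_mult[OF assms(1), of a] by simp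

lemma eta_cont_lin:
  assumes AB: "A \<subseteq> bop I" and D: "density_operator I W" and Pb: "P \<in> bop I"
  shows "cont_lin_functional I A (\<lambda>X. omega I W X - omega I (W_P I P W) X)"
proof -
  have Wp: "positive_op I W" using D by (simp add: density_operator_def)
  have sW: "summable (\<lambda>n. if n \<in> I then Re (W (basis_vec n) n) else 0)"
    using D unfolding density_operator_def vinner_basis by simp
  have W: "blin I W (opnorm I W)" by (rule pos_blin[OF Wp])
  define cP where "cP = opnorm I P"
  have P: "blin I P cP" unfolding cP_def by (rule bop_blin[OF Pb])
  have cP0: "cP \<ge> 0" by (rule blin_nonneg[OF P])
  let ?Q = "opminus I (idop I) P"
  have Q: "blin I ?Q (1 + cP)" by (rule blin_Q[OF P])
  define T where "T = trW I W"
  have T0: "T \<ge> 0" unfolding T_def by (rule trW_nonneg[OF Wp sW])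
  define WP where "WP = W_P I P W"
  have WPb: "blin I WP (cP * opnorm I W * cP + (1 + cP) * opnorm I W * (1 + cP))"
    unfolding WP_def W_P_def by (intro blin_opplus blin_comp P Q W)
  define tW where "tW V X n = (if n \<in> I then vinner (basis_vec n) (V (X (basis_vec n))) else 0)" for V X :: op and n
  have om: "omega I V X = suminf (tW V X)" for V X unfolding tW_def by (rule omega_eq)
  have sA: "summable (tW W X) \<and> cmod (suminf (tW W X)) \<le> 1 * cX * T" if X: "blin I X cX" for X cX
  proof -
    have u: "\<And>n. n \<in> I \<Longrightarrow> basis_vec n \<in> l2 I" by (rule basis_l2)
    have u': "\<And>n. n \<in> I \<Longrightarrow> X (basis_vec n) \<in> l2 I" using blin_l2[OF X basis_l2] by blast
    have fr: "\<And>d F. d \<in> l2 I \<Longrightarrow> finite F \<Longrightarrow> F \<subseteq> I \<Longrightarrow> (\<Sum>n\<in>F. (cmod (vinner d (basis_vec n)))\<^sup>2) \<le> 1\<^sup>2 * (vnorm d)\<^sup>2"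
      by (rule basis_frame)
    have fr': "\<And>d F. d \<in> l2 I \<Longrightarrow> finite F \<Longrightarrow> F \<subseteq> I \<Longrightarrow> (\<Sum>n\<in>F. (cmod (vinner d (X (basis_vec n))))\<^sup>2) \<le> cX\<^sup>2 * (vnorm d)\<^sup>2"
      by (rule col_frame[OF X])
    have e: "tW W X = (\<lambda>n. if n \<in> I then vinner (basis_vec n) (W (X (basis_vec n))) else 0)" by (simp add: tW_def fun_eq_iff)
    show ?thesis unfolding e T_def
      using trace_summable[OF Wp sW u fr u' fr' _ blin_nonneg[OF X]] by simp
  qed
  have sR: "summable (\<lambda>n. if n \<in> I then vinner (row I R n) (W (R (X (basis_vec n)))) else 0)
      \<and> cmod (\<Sum>n. if n \<in> I then vinner (row I R n) (W (R (X (basis_vec n)))) else 0) \<le> cR * (cR * cX) * T"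
    if R: "blin I R cR" and X: "blin I X cX" for R X cR cX
  proof -
    have RX: "blin I (R \<circ> X) (cR * cX)" by (rule blin_comp[OF R X])
    have u: "\<And>n. n \<in> I \<Longrightarrow> row I R n \<in> l2 I" by (rule row_l2[OF R])
    have u': "\<And>n. n \<in> I \<Longrightarrow> (R \<circ> X) (basis_vec n) \<in> l2 I" using blin_l2[OF RX basis_l2] by blast
    have fr: "\<And>d F. d \<in> l2 I \<Longrightarrow> finite F \<Longrightarrow> F \<subseteq> I \<Longrightarrow> (\<Sum>n\<in>F. (cmod (vinner d (row I R n)))\<^sup>2) \<le> cR\<^sup>2 * (vnorm d)\<^sup>2"
      by (rule row_frame[OF R])
    have fr': "\<And>d F. d \<in> l2 I \<Longrightarrow> finite F \<Longrightarrow> F \<subseteq> I \<Longrightarrow> (\<Sum>n\<in>F. (cmod (vinner d ((R \<circ> X) (basis_vec n))))\<^sup>2) \<le> (cR * cX)\<^sup>2 * (vnorm d)\<^sup>2"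
      by (rule col_frame[OF RX])
    show ?thesis unfolding T_def
      using trace_summable[OF Wp sW u fr u' fr' blin_nonneg[OF R] blin_nonneg[OF RX]] unfolding comp_def by simp
  qed
  have tP: "tW WP X = (\<lambda>n. (if n \<in> I then vinner (row I P n) (W (P (X (basis_vec n)))) else 0)
       + (if n \<in> I then vinner (row I ?Q n) (W (?Q (X (basis_vec n)))) else 0))" if X: "blin I X cX" for X cX
    unfolding tW_def WP_def fun_eq_iff using omegaP_term[OF P W X] by simp
  have sB: "summable (tW WP X) \<and> cmod (suminf (tW WP X)) \<le> cP * (cP * cX) * T + (1 + cP) * ((1 + cP) * cX) * T"
    if X: "blin I X cX" for X cX
  proof -
    have a: "summable (\<lambda>n. if n \<in> I then vinner (row I P n) (W (P (X (basis_vec n)))) else 0)"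
      "cmod (\<Sum>n. if n \<in> I then vinner (row I P n) (W (P (X (basis_vec n)))) else 0) \<le> cP * (cP * cX) * T"
      using sR[OF P X] by auto
    have b: "summable (\<lambda>n. if n \<in> I then vinner (row I ?Q n) (W (?Q (X (basis_vec n)))) else 0)"
      "cmod (\<Sum>n. if n \<in> I then vinner (row I ?Q n) (W (?Q (X (basis_vec n)))) else 0) \<le> (1 + cP) * ((1 + cP) * cX) * T"
      using sR[OF Q X] by auto
    have eq: "suminf (tW WP X) = (\<Sum>n. if n \<in> I then vinner (row I P n) (W (P (X (basis_vec n)))) else 0)
       + (\<Sum>n. if n \<in> I then vinner (row I ?Q n) (W (?Q (X (basis_vec n)))) else 0)"
      unfolding tP[OF X] by (rule suminf_add[symmetric, OF a(1) b(1)])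
    have "cmod (suminf (tW WP X)) \<le> cmod (\<Sum>n. if n \<in> I then vinner (row I P n) (W (P (X (basis_vec n)))) else 0)
       + cmod (\<Sum>n. if n \<in> I then vinner (row I ?Q n) (W (?Q (X (basis_vec n)))) else 0)"
      unfolding eq by (rule norm_triangle_ineq)
    then have "cmod (suminf (tW WP X)) \<le> cP * (cP * cX) * T + (1 + cP) * ((1 + cP) * cX) * T"
      using a(2) b(2) by linarith
    moreover have "summable (tW WP X)" unfolding tP[OF X] by (rule summable_add[OF a(1) b(1)])
    ultimately show ?thesis by blast
  qed
  have lin_t: "tW V (opplus I (opscale I a X) Y) n = a * tW V X n + tW V Y n"
    if V: "blin I V cV" and X: "blin I X cX" and Y: "blin I Y cY" for V X Y cV cX cY a n
  proof (cases "n \<in> I")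
    case True
    have e: "basis_vec n \<in> l2 I" by (rule basis_l2[OF True])
    have Z: "opplus I (opscale I a X) Y (basis_vec n) = (\<lambda>k. a * X (basis_vec n) k + Y (basis_vec n) k)"
      using e blin_l2[OF X e] by (simp add: opplus_def opscale_def)
    show ?thesis unfolding tW_def using True
      by (simp add: Z vinner_basis blin_lin[OF V blin_l2[OF X e] blin_l2[OF Y e]])
  next
    case False then show ?thesis by (simp add: tW_def)
  qed
  show ?thesis unfolding cont_lin_functional_def
  proof (intro conjI ballI allI)
    fix X Y a assume XA: "X \<in> A" and YA: "Y \<in> A"
    have X: "blin I X (opnorm I X)" and Y: "blin I Y (opnorm I Y)" using XA YA AB bop_blin by auto
    have e1: "omega I W (opplus I (opscale I a X) Y) = a * omega I W X + omega I W Y"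
      unfolding om lin_t[OF W X Y] by (rule suminf_lin) (use sA[OF X] sA[OF Y] in auto)
    have e2: "omega I (W_P I P W) (opplus I (opscale I a X) Y) = a * omega I (W_P I P W) X + omega I (W_P I P W) Y"
      unfolding WP_def[symmetric] om lin_t[OF WPb X Y] by (rule suminf_lin) (use sB[OF X] sB[OF Y] in auto)
    show "omega I W (opplus I (opscale I a X) Y) - omega I (W_P I P W) (opplus I (opscale I a X) Y) =
        a * (omega I W X - omega I (W_P I P W) X) + (omega I W Y - omega I (W_P I P W) Y)"
      unfolding e1 e2 by (simp add: algebra_simps)
  next
    show "\<exists>C. \<forall>X\<in>A. cmod (omega I W X - omega I (W_P I P W) X) \<le> C * opnorm I X"
    proof (intro exI ballI)
      fix X assume XA: "X \<in> A"
      have X: "blin I X (opnorm I X)" using XA AB bop_blin by auto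
      have "cmod (omega I W X - omega I (W_P I P W) X) \<le> cmod (omega I W X) + cmod (omega I (W_P I P W) X)"
        by (rule norm_triangle_ineq4)
      also have "\<dots> \<le> 1 * opnorm I X * T + (cP * (cP * opnorm I X) * T + (1 + cP) * ((1 + cP) * opnorm I X) * T)"
        using sA[OF X] sB[OF X] unfolding om WP_def by (intro add_mono) auto
      also have "\<dots> = (T * (1 + cP * cP + (1 + cP) * (1 + cP))) * opnorm I X"
        by (simp add: algebra_simps)
      finally show "cmod (omega I W X - omega I (W_P I P W) X) \<le> (T * (1 + cP * cP + (1 + cP) * (1 + cP))) * opnorm I X" .
    qed
  qed
qed

lemma strip_open: "open (strip l)"
  unfolding strip_def by (intro open_Collect_less continuous_intros)

lemma strip_convex: "convex (strip l)"
  unfolding strip_def convex_def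
proof (intro allI impI ballI, clarsimp)
  fix x y :: complex and u v :: real
  assume a: "\<bar>Im x\<bar> < l" "\<bar>Im y\<bar> < l" "0 \<le> u" "0 \<le> v" "u + v = 1"
  have "\<bar>u * Im x + v * Im y\<bar> \<le> u * \<bar>Im x\<bar> + v * \<bar>Im y\<bar>"
    using a by (metis abs_mult abs_of_nonneg abs_triangle_ineq)
  also have "\<dots> < l"
  proof (cases "u = 0")
    case True then show ?thesis using a by simp
  next
    case False
    then have "u * \<bar>Im x\<bar> < u * l" using a by (simp add: mult_strict_left_mono)
    moreover have "v * \<bar>Im y\<bar> \<le> v * l" using a by (simp add: mult_left_mono)
    ultimately show ?thesis using a by (simp add: algebra_simps) (metis add_less_le_mono distrib_left mult.right_neutral)
  qed
  finally show "\<bar>u * Im x + v * Im y\<bar> < l" .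
qed

lemma zeros_part:
  fixes g :: "complex \<Rightarrow> complex" and l t1 :: real
  assumes an: "g analytic_on strip l" and l: "l > 0" and g1: "g (of_real t1) \<noteq> 0"
  defines "S \<equiv> {t\<in>{0..t1}. g (of_real t) = 0}"
  shows "countable S \<and> (\<forall>t0\<in>S. \<exists>r>0. \<forall>t\<in>S. \<bar>t - t0\<bar> < r \<longrightarrow> t = t0)"
proof -
  have hol: "g holomorphic_on strip l" using an by (simp add: analytic_imp_holomorphic)
  have op: "open (strip l)" by (rule strip_open)
  have co: "connected (strip l)" by (simp add: convex_connected strip_convex)
  have rin: "\<And>t. complex_of_real t \<in> strip l" using l by (simp add: strip_def)
  have disc: "\<forall>t0\<in>S. \<exists>r>0. \<forall>t\<in>S. \<bar>t - t0\<bar> < r \<longrightarrow> t = t0"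
  proof
    fix t0 assume "t0 \<in> S"
    then have z: "g (of_real t0) = 0" by (simp add: S_def)
    obtain r where r: "0 < r" "\<And>z. z \<in> ball (of_real t0) r - {of_real t0} \<Longrightarrow> g z \<noteq> 0"
      using isolated_zeros[OF hol op co rin z rin g1] by metis
    show "\<exists>r>0. \<forall>t\<in>S. \<bar>t - t0\<bar> < r \<longrightarrow> t = t0"
    proof (intro exI[of _ r] conjI ballI impI)
      fix t assume "t \<in> S" "\<bar>t - t0\<bar> < r"
      then have "g (of_real t) = 0" "of_real t \<in> ball (complex_of_real t0) r"
        by (auto simp: S_def dist_norm norm_of_real[symmetric] simp del: of_real_diff
            simp flip: of_real_diff abs_minus_commute)
      then show "t = t0" using r(2) by fastforce
    qed (use r in auto)
  qed
  have sp: "(complex_of_real ` S) sparse_in strip l"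
    unfolding sparse_in_open[OF op]
  proof (intro ballI notI)
    fix y assume y: "y \<in> strip l" "y islimpt complex_of_real ` S"
    have "g (of_real t1) = 0"
      by (rule analytic_continuation[OF hol op co _ y(1) y(2)]) (auto simp: S_def rin)
    with g1 show False by simp
  qed
  have "countable (strip l \<inter> complex_of_real ` S)"
    by (rule sparse_imp_countable[OF op sp])
  moreover have "strip l \<inter> complex_of_real ` S = complex_of_real ` S" using rin by auto
  ultimately have "countable (complex_of_real ` S)" by simp
  then have "countable S" by (rule countable_image_inj_on) (simp add: inj_on_def)
  with disc show ?thesis by blast
qed

theorem proposition13:
  fixes I :: "nat set" and A :: "op set" and U :: "real \<Rightarrow> op"
    and W P :: op and t1 :: real
  assumes "von_neumann_algebra I A"
    and "strongly_cont_unitary_rep I U"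
    and "\<forall>t. bij_betw (tau I U t) A A"
    and "\<forall>X\<in>A. \<forall>t0. ((\<lambda>t. opnorm I (opminus I (tau I U t X) (tau I U t0 X))) \<longlongrightarrow> 0) (at t0)"
    and "density_operator I W"
    and "P \<in> A" and "projection I P"
    and "analytic_elem I A U P"
    and "t1 > 0"
    and "omega I W (tau I U t1 P) \<noteq> omega I (W_P I P W) (tau I U t1 P)"
  shows "countable {t \<in> {0..t1}. omega I W (tau I U t P) = omega I (W_P I P W) (tau I U t P)}
     \<and> (\<forall>t0 \<in> {t \<in> {0..t1}. omega I W (tau I U t P) = omega I (W_P I P W) (tau I U t P)}.
          \<exists>r>0. \<forall>t \<in> {t \<in> {0..t1}. omega I W (tau I U t P) = omega I (W_P I P W) (tau I U t P)}.
             \<bar>t - t0\<bar> < r \<longrightarrow> t = t0)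
     \<and> CSIP_causal I A U"
proof -
  have AB: "A \<subseteq> bop I" using assms(1) by (simp add: von_neumann_algebra_def)
  have Pb: "P \<in> bop I" using assms(6) AB by auto
  obtain l f where l: "l > 0" and ft: "\<forall>t::real. f (complex_of_real t) = tau I U t P"
      and an: "\<forall>\<eta>. cont_lin_functional I A \<eta> \<longrightarrow> (\<lambda>z. \<eta> (f z)) analytic_on strip l"
    using assms(8) unfolding analytic_elem_def by blast
  define \<eta> where "\<eta> = (\<lambda>X. omega I W X - omega I (W_P I P W) X)"
  have cl: "cont_lin_functional I A \<eta>" unfolding \<eta>_def by (rule eta_cont_lin[OF AB assms(5) Pb])
  have gan: "(\<lambda>z. \<eta> (f z)) analytic_on strip l" using an cl by blast
  have g1: "(\<lambda>z. \<eta> (f z)) (complex_of_real t1) \<noteq> 0" using assms(10) ft by (simp add: \<eta>_def)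
  define S where "S = {t \<in> {0..t1}. omega I W (tau I U t P) = omega I (W_P I P W) (tau I U t P)}"
  have Seq: "{t\<in>{0..t1}. (\<lambda>z. \<eta> (f z)) (complex_of_real t) = 0} = S"
    unfolding S_def \<eta>_def using ft by auto
  have zp: "countable S \<and> (\<forall>t0\<in>S. \<exists>r>0. \<forall>t\<in>S. \<bar>t - t0\<bar> < r \<longrightarrow> t = t0)"
    using zeros_part[OF gan l g1] unfolding Seq .
  have CS: "CSIP_causal I A U"
    unfolding CSIP_causal_def
  proof (intro exI conjI)
    show "density_operator I W" by (rule assms(5))
    show "P \<in> A" by (rule assms(6))
    show "self_adjoint I P" using assms(7) by (simp add: projection_def)
    show "P \<in> A" by (rule assms(6))
    show "projection I P" by (rule assms(7))
    show "t1 > 0" by (rule assms(9))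
    show "countable S" using zp by blast
    show "\<forall>t0\<in>S. \<exists>r>0. \<forall>t\<in>S. \<bar>t - t0\<bar> < r \<longrightarrow> t = t0" using zp by blast
    show "\<forall>t\<in>{0<..t1} - S. omega I W (tau I U t P) \<noteq> omega I (W_P I P W) (tau I U t P)"
      unfolding S_def by auto
  qed
  show ?thesis using zp CS unfolding S_def by blast
qed

end
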